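(* Fix $\mathbf a=(a_\alpha)_{\alpha\in R^+}\in\mathbb Z_{\ge0}^{n(n-1)/2}$. Then the set $\{\overline{\mathbf f^{\mathbf s}}:\mathbf s\in S(\mathbf a)\}$ of images of the monomials $\mathbf f^{\mathbf s}$ spans $S(\mathfrak n^-)/\mathcal I(\mathbf a)$.
   Context: Let $\mathfrak{sl}_n=\mathfrak n^+\oplus\mathfrak h\oplus\mathfrak n^-$ with simple roots $\alpha_1,\dots,\alpha_{n-1}$ and positive roots $R^+=\{\alpha_{k,\ell}=\alpha_k+\dots+\alpha_\ell:1\le k\le\ell\le n-1\}$; $f_\alpha\in\mathfrak g_{-\alpha}$, $e_\alpha\in\mathfrak g_\alpha$ are root vectors. $S(\mathfrak n^-)$ is the symmetric algebra (polynomial ring) of $\mathfrak n^-$, identified with the associated graded algebra of $U(\mathfrak n^-)$ for the PBW filtration. $\mathfrak n^+$ acts on $\mathfrak n^-\cong\mathfrak{sl}_n/(\mathfrak n^+\oplus\mathfrak h)$ via the adjoint action (so $e_\alpha\circ f_\beta$ is a multiple of $f_{\beta-\alpha}$ if $\beta-\alpha\in R^+$ and $0$ otherwise), and this action is extended to $S(\mathfrak n^-)$ by derivations; denote it by $\circ$. For $\mathbf a=(a_\alpha)$, $\mathcal I(\mathbf a)\subset S(\mathfrak n^-)$ is the ideal generated by $\sum_{\alpha\in R^+}U(\mathfrak n^+)\circ f_\alpha^{a_\alpha+1}$. A Dyck path is a sequence $\mathbf p=(\beta_1,\dots,\beta_s)$, $s\ge1$, of positive roots such that if $\beta_i=\alpha_{k,\ell}$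 then $\beta_{i+1}\in\{\alpha_{k+1,\ell},\alpha_{k,\ell+1}\}$; if $\beta_1=\alpha_{k_1,\ell_1}$ and $\beta_s=\alpha_{k_s,\ell_s}$, its base root is $\beta(\mathbf p)=\alpha_{k_1,\ell_s}$. Let $\mathcal P(\mathbf a)=\{(x_\alpha)\in\mathbb R^{n(n-1)/2}:\sum_{\alpha\in\mathbf p}x_\alpha\le a_{\beta(\mathbf p)}\text{ for all Dyck paths }\mathbf p\}$ and $S(\mathbf a)=\mathcal P(\mathbf a)\cap\mathbb Z_{\ge0}^{n(n-1)/2}$. For $\mathbf t=(t_\alpha)\in\mathbb Z_{\ge0}^{n(n-1)/2}$, $\mathbf f^{\mathbf t}=\prod_{\alpha\in R^+}f_\alpha^{t_\alpha}\in S(\mathfrak n^-)$. *)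

theory Defs
  imports Complex_Main "HOL-Library.Poly_Mapping"
begin

text \<open>Positive roots alpha_{k,l} of sl_n are encoded as pairs (k,l) with 1 <= k <= l <= n-1.
  S(n^-) is the polynomial ring over the complex numbers in the variables f_(k,l),
  (k,l) positive roots; we realise it inside the polynomial ring
  ((nat*nat) =>0 nat) =>0 complex as the polynomials whose monomials only use
  variables indexed by positive roots.\<close>

type_synonym root = "nat \<times> nat"
type_synonym mono = "root \<Rightarrow>\<^sub>0 nat"
type_synonym poly = "mono \<Rightarrow>\<^sub>0 complex"

definition Rplus :: "nat \<Rightarrow> root set" where
  "Rplus n = {(k, l). 1 \<le> k \<and> k \<le> l \<and> l \<le> n - 1}"

definition Sn :: "nat \<Rightarrow> poly set" where
  "Sn n = {p. \<forall>m \<in> Poly_Mapping.keys p. Poly_Mapping.keys m \<subseteq> Rplus n}"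

definition fvar :: "root \<Rightarrow> poly" where
  "fvar \<beta> = Poly_Mapping.single (Poly_Mapping.single \<beta> 1) 1"

definition fmon :: "mono \<Rightarrow> poly" where
  "fmon t = Poly_Mapping.single t 1"

definition const_poly :: "complex \<Rightarrow> poly" where
  "const_poly c = Poly_Mapping.single 0 c"

definition mpderiv :: "root \<Rightarrow> poly \<Rightarrow> poly" where
  "mpderiv \<beta> p = (\<Sum>m \<in> Poly_Mapping.keys p.
      Poly_Mapping.single (m - Poly_Mapping.single \<beta> 1)
        (Poly_Mapping.lookup p m * of_nat (Poly_Mapping.lookup m \<beta>)))"

text \<open>Adjoint action of e_alpha on f_beta in sl_n / (n^+ + h), with the Chevalley
  basis e_{alpha_{i,j}} = E_{i,j+1}, f_{alpha_{k,l}} = E_{l+1,k}: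
  [E_{i,j+1}, E_{l+1,k}] = delta_{j,l} E_{i,k} - delta_{i,k} E_{l+1,j+1},
  and only strictly lower triangular parts survive the projection.\<close>
definition e_on_f :: "root \<Rightarrow> root \<Rightarrow> poly" where
  "e_on_f \<alpha> \<beta> = (case \<alpha> of (i, j) \<Rightarrow> case \<beta> of (k, l) \<Rightarrow>
      if j = l \<and> k < i then fvar (k, i - 1)
      else if i = k \<and> j < l then - fvar (j + 1, l)
      else 0)"

definition eact :: "nat \<Rightarrow> root \<Rightarrow> poly \<Rightarrow> poly" where
  "eact n \<alpha> p = (\<Sum>\<beta> \<in> Rplus n. e_on_f \<alpha> \<beta> * mpderiv \<beta> p)"

text \<open>U(n^+) o f_alpha^(a_alpha+1) is the span of all iterated applications of
  root vectors e_gamma to f_alpha^(a_alpha+1); Igen collects these iterates.\<close>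
inductive_set Igen :: "nat \<Rightarrow> (root \<Rightarrow> nat) \<Rightarrow> poly set" for n a where
  base: "\<alpha> \<in> Rplus n \<Longrightarrow> fvar \<alpha> ^ (a \<alpha> + 1) \<in> Igen n a"
| step: "\<gamma> \<in> Rplus n \<Longrightarrow> g \<in> Igen n a \<Longrightarrow> eact n \<gamma> g \<in> Igen n a"

definition ideal_gen :: "nat \<Rightarrow> poly set \<Rightarrow> poly set" where
  "ideal_gen n G = {(\<Sum>g \<in> F. q g * g) | F q. finite F \<and> F \<subseteq> G \<and> (\<forall>g \<in> F. q g \<in> Sn n)}"

definition Ia :: "nat \<Rightarrow> (root \<Rightarrow> nat) \<Rightarrow> poly set" where
  "Ia n a = ideal_gen n (Igen n a)"

definition dyck_path :: "nat \<Rightarrow> root list \<Rightarrow> bool" where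
  "dyck_path n p \<longleftrightarrow> p \<noteq> [] \<and> set p \<subseteq> Rplus n \<and>
     (\<forall>i. Suc i < length p \<longrightarrow>
        (p ! Suc i = (fst (p ! i) + 1, snd (p ! i)) \<or> p ! Suc i = (fst (p ! i), snd (p ! i) + 1)))"

definition base_root :: "root list \<Rightarrow> root" where
  "base_root p = (fst (hd p), snd (last p))"

text \<open>S(a): nonnegative integer points of the polytope P(a), indexed by positive roots.\<close>
definition Sa :: "nat \<Rightarrow> (root \<Rightarrow> nat) \<Rightarrow> mono set" where
  "Sa n a = {s. Poly_Mapping.keys s \<subseteq> Rplus n \<and>
     (\<forall>p. dyck_path n p \<longrightarrow> (\<Sum>\<alpha>\<leftarrow>p. Poly_Mapping.lookup s \<alpha>) \<le> a (base_root p))}"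

end

theory Submission
  imports Defs "HOL-Library.Product_Lexorder"
begin


abbreviation (input) lookup where "lookup \<equiv> Poly_Mapping.lookup"
abbreviation (input) keys where "keys \<equiv> Poly_Mapping.keys"

lemma lookup_const_mult: "lookup (const_poly c * p) m = c * lookup p m"
  unfolding const_poly_def mult_map_scale_conv_mult[symmetric]
  by (simp add: Poly_Mapping.map.rep_eq when_def)

lemma const_mult_single: "const_poly c * Poly_Mapping.single k v = Poly_Mapping.single k (c * v)"
  unfolding const_poly_def by (simp add: mult_single)

lemma const_poly_mult: "const_poly c * const_poly d = const_poly (c * d)"
  unfolding const_poly_def by (simp add: mult_single)

lemma const_poly_one: "const_poly 1 = 1"
  unfolding const_poly_def by simp

lemma const_poly_zero: "const_poly 0 = 0"
  unfolding const_poly_def by simp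

lemma const_poly_add: "const_poly (c + d) = const_poly c + const_poly d"
  unfolding const_poly_def by (simp add: single_add)

lemma const_poly_minus_one: "const_poly (-1) * p = - p"
  by (rule poly_mapping_eqI) (simp add: lookup_const_mult)

lemma keys_const_mult: "c \<noteq> 0 \<Longrightarrow> keys (const_poly c * p) = keys p"
  by (auto simp: in_keys_iff lookup_const_mult)

lemma poly_expand: "(p::poly) = (\<Sum>m\<in>keys p. const_poly (lookup p m) * fmon m)"
proof (rule poly_mapping_eqI)
  fix k
  have "lookup (\<Sum>m\<in>keys p. const_poly (lookup p m) * fmon m) k
      = (\<Sum>m\<in>keys p. (lookup p m when m = k))"
    by (simp add: lookup_sum fmon_def const_mult_single lookup_single)
  also have "\<dots> = lookup p k"
    by (cases "k \<in> keys p") (auto simp: when_def in_keys_iff)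
  finally show "lookup p k = lookup (\<Sum>m\<in>keys p. const_poly (lookup p m) * fmon m) k" by simp
qed

lemma fmon_mult: "fmon a * fmon b = fmon (a + b)"
  unfolding fmon_def by (simp add: mult_single)

lemma fvar_fmon: "fvar \<beta> = fmon (Poly_Mapping.single \<beta> 1)"
  unfolding fvar_def fmon_def ..

lemma fvar_power: "fvar \<beta> ^ k = fmon (Poly_Mapping.single \<beta> k)"
proof (induction k)
  case 0 then show ?case by (simp add: fmon_def)
next
  case (Suc k) then show ?case
    by (simp add: fvar_fmon fmon_mult single_add[symmetric] add.commute)
qed

lemma keys_fmon [simp]: "keys (fmon m) = {m}"
  unfolding fmon_def by simp

lemma mpderiv_const: "mpderiv \<beta> (const_poly c * p) = const_poly c * mpderiv \<beta> p"
proof (cases "c = 0")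
  case True then show ?thesis by (simp add: const_poly_zero mpderiv_def)
next
  case False
  show ?thesis unfolding mpderiv_def keys_const_mult[OF False]
    by (simp add: sum_distrib_left const_mult_single lookup_const_mult mult.assoc)
qed

lemma eact_const: "eact n \<gamma> (const_poly c * p) = const_poly c * eact n \<gamma> p"
  unfolding eact_def by (simp add: mpderiv_const sum_distrib_left mult.left_commute)



definition nonneg :: "poly \<Rightarrow> bool" where
  "nonneg q \<longleftrightarrow> (\<forall>m. Im (lookup q m) = 0 \<and> 0 \<le> Re (lookup q m))"

lemma nonneg_zero: "nonneg 0" by (simp add: nonneg_def)

lemma nonneg_add: "nonneg p \<Longrightarrow> nonneg q \<Longrightarrow> nonneg (p + q)"
  by (simp add: nonneg_def lookup_add)

lemma cplx0:
  fixes a b :: complex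
  assumes "Im a = 0" "Im b = 0" "0 \<le> Re a" "0 \<le> Re b"
  shows "a + b = 0 \<longleftrightarrow> a = 0 \<and> b = 0"
proof
  assume h: "a + b = 0"
  have "Re a + Re b = 0" using h by (metis plus_complex.sel(1) zero_complex.sel(1))
  then have "Re a = 0" "Re b = 0" using assms by linarith+
  then show "a = 0 \<and> b = 0" using assms by (simp add: complex_eq_iff)
qed simp

lemma keys_add_nonneg: assumes "nonneg p" "nonneg q" shows "keys (p + q) = keys p \<union> keys q"
proof -
  have e: "lookup p m + lookup q m = 0 \<longleftrightarrow> lookup p m = 0 \<and> lookup q m = 0" for m
    by (rule cplx0) (use assms in \<open>auto simp: nonneg_def\<close>)
  show ?thesis
  proof (rule set_eqI)
    fix m
    show "m \<in> keys (p + q) \<longleftrightarrow> m \<in> keys p \<union> keys q"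
      unfolding in_keys_iff lookup_add Un_iff using e[of m] by blast
  qed
qed

lemma nonneg_sum_keys:
  assumes "finite I" "\<And>i. i \<in> I \<Longrightarrow> nonneg (f i)"
  shows "nonneg (sum f I) \<and> keys (sum f I) = (\<Union>i\<in>I. keys (f i))"
  using assms
proof (induction I rule: finite_induct)
  case empty then show ?case by (simp add: nonneg_zero)
next
  case (insert i I)
  then show ?case by (simp add: nonneg_add keys_add_nonneg)
qed

lemma nonneg_single: "Im v = 0 \<Longrightarrow> 0 \<le> Re v \<Longrightarrow> nonneg (Poly_Mapping.single k v)"
  by (simp add: nonneg_def lookup_single when_def)

lemma nonneg_fmon: "nonneg (fmon m)"
  unfolding fmon_def by (rule nonneg_single) auto

lemma mpderiv_zero:
  assumes "\<forall>x\<in>keys q. \<beta> \<notin> keys x"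
  shows "mpderiv \<beta> q = 0"
  unfolding mpderiv_def
  by (rule sum.neutral) (use assms in \<open>auto simp: in_keys_iff\<close>)

lemma finite_Rplus: "finite (Rplus n)"
proof -
  have "Rplus n \<subseteq> {0..n} \<times> {0..n}" by (auto simp: Rplus_def)
  then show ?thesis by (rule finite_subset) auto
qed

lemma KL0:
  fixes \<sigma> :: complex
  assumes reg: "R \<subseteq> Rplus n" "finite R"
    and nn: "nonneg q"
    and kq: "\<forall>x\<in>keys q. keys x \<subseteq> R"
    and ef: "\<forall>\<beta>\<in>R. e_on_f \<gamma> \<beta> = (if P \<beta> then const_poly \<sigma> * fvar (g \<beta>) else 0)"
    and sg: "\<sigma> * \<sigma> = 1"
  shows "nonneg (const_poly \<sigma> * eact n \<gamma> q) \<and>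
    keys (const_poly \<sigma> * eact n \<gamma> q) =
      {x - Poly_Mapping.single \<beta> 1 + Poly_Mapping.single (g \<beta>) 1 | x \<beta>.
          x \<in> keys q \<and> \<beta> \<in> R \<and> P \<beta> \<and> 0 < lookup x \<beta>}"
proof -
  define T where "T \<beta> x = Poly_Mapping.single (x - Poly_Mapping.single \<beta> 1 + Poly_Mapping.single (g \<beta>) 1)
        (lookup q x * of_nat (lookup x \<beta>))" for \<beta> x
  have e1: "eact n \<gamma> q = (\<Sum>\<beta>\<in>R. e_on_f \<gamma> \<beta> * mpderiv \<beta> q)"
    unfolding eact_def
  proof (rule sum.mono_neutral_right)
    show "\<forall>i\<in>Rplus n - R. e_on_f \<gamma> i * mpderiv i q = 0"
    proof
      fix \<beta> assume "\<beta> \<in> Rplus n - R"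
      then have "\<forall>x\<in>keys q. \<beta> \<notin> keys x" using kq by blast
      then show "e_on_f \<gamma> \<beta> * mpderiv \<beta> q = 0" by (simp add: mpderiv_zero)
    qed
  qed (use reg finite_Rplus in auto)
  have e2: "const_poly \<sigma> * (e_on_f \<gamma> \<beta> * mpderiv \<beta> q) = (if P \<beta> then fvar (g \<beta>) * mpderiv \<beta> q else 0)"
    if "\<beta> \<in> R" for \<beta>
    using ef that sg
    by (simp add: mult.assoc[symmetric] const_poly_mult const_poly_one)
  have e3: "fvar (g \<beta>) * mpderiv \<beta> q = (\<Sum>x\<in>keys q. T \<beta> x)" for \<beta>
    unfolding mpderiv_def T_def fvar_def sum_distrib_left
    by (simp add: mult_single add.commute)
  have E: "const_poly \<sigma> * eact n \<gamma> q = (\<Sum>\<beta>\<in>{\<beta>\<in>R. P \<beta>}. \<Sum>x\<in>keys q. T \<beta> x)"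
    unfolding e1 sum_distrib_left
    using e2 e3 by (simp add: sum.inter_filter[symmetric] reg)
  have nnT: "nonneg (T \<beta> x)" for \<beta> x
    using nn unfolding T_def nonneg_def by (intro nonneg_single[unfolded nonneg_def]) auto
  have kT: "keys (T \<beta> x) = (if 0 < lookup x \<beta> then {x - Poly_Mapping.single \<beta> 1 + Poly_Mapping.single (g \<beta>) 1} else {})"
    if "x \<in> keys q" for \<beta> x
    using that unfolding T_def by (auto simp: in_keys_iff)
  have inner: "nonneg (\<Sum>x\<in>keys q. T \<beta> x) \<and> keys (\<Sum>x\<in>keys q. T \<beta> x) = (\<Union>x\<in>keys q. keys (T \<beta> x))" for \<beta>
    by (rule nonneg_sum_keys) (auto simp: nnT)
  have outer: "nonneg (\<Sum>\<beta>\<in>{\<beta>\<in>R. P \<beta>}. \<Sum>x\<in>keys q. T \<beta> x) \<and>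
     keys (\<Sum>\<beta>\<in>{\<beta>\<in>R. P \<beta>}. \<Sum>x\<in>keys q. T \<beta> x) = (\<Union>\<beta>\<in>{\<beta>\<in>R. P \<beta>}. keys (\<Sum>x\<in>keys q. T \<beta> x))"
    by (rule nonneg_sum_keys) (use reg inner in auto)
  have K: "(\<Union>\<beta>\<in>{\<beta>\<in>R. P \<beta>}. keys (\<Sum>x\<in>keys q. T \<beta> x)) =
      {x - Poly_Mapping.single \<beta> 1 + Poly_Mapping.single (g \<beta>) 1 | x \<beta>.
          x \<in> keys q \<and> \<beta> \<in> R \<and> P \<beta> \<and> 0 < lookup x \<beta>}" (is "?L = ?R")
  proof
    show "?L \<subseteq> ?R"
    proof
      fix y assume "y \<in> ?L"
      then obtain \<beta> x where "\<beta> \<in> R" "P \<beta>" "x \<in> keys q" "y \<in> keys (T \<beta> x)"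
        using inner by blast
      then have "0 < lookup x \<beta> \<and> y = x - Poly_Mapping.single \<beta> 1 + Poly_Mapping.single (g \<beta>) 1"
        using kT[of x \<beta>] by (simp split: if_splits)
      then show "y \<in> ?R" using \<open>\<beta> \<in> R\<close> \<open>P \<beta>\<close> \<open>x \<in> keys q\<close> by blast
    qed
    show "?R \<subseteq> ?L"
    proof
      fix y assume "y \<in> ?R"
      then obtain \<beta> x where "\<beta> \<in> R" "P \<beta>" "x \<in> keys q" "0 < lookup x \<beta>"
        and y: "y = x - Poly_Mapping.single \<beta> 1 + Poly_Mapping.single (g \<beta>) 1" by blast
      then have "y \<in> keys (T \<beta> x)" using kT by simp
      then show "y \<in> ?L" using inner \<open>\<beta> \<in> R\<close> \<open>P \<beta>\<close> \<open>x \<in> keys q\<close> by blast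
    qed
  qed
  show ?thesis
    unfolding E using outer unfolding K .
qed



lemma KL:
  fixes \<sigma> \<tau> :: complex
  assumes reg: "R \<subseteq> Rplus n" "finite R"
    and nn: "nonneg (const_poly \<tau> * q)" and st: "\<tau> * \<tau> = 1"
    and kq: "\<forall>x\<in>keys q. keys x \<subseteq> R"
    and ef: "\<forall>\<beta>\<in>R. e_on_f \<gamma> \<beta> = (if P \<beta> then const_poly \<sigma> * fvar (g \<beta>) else 0)"
    and sg: "\<sigma> * \<sigma> = 1"
  shows "nonneg (const_poly (\<tau> * \<sigma>) * eact n \<gamma> q) \<and>
    keys (eact n \<gamma> q) =
      {x - Poly_Mapping.single \<beta> 1 + Poly_Mapping.single (g \<beta>) 1 | x \<beta>.
          x \<in> keys q \<and> \<beta> \<in> R \<and> P \<beta> \<and> 0 < lookup x \<beta>}"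
proof -
  have t0: "\<tau> \<noteq> 0" using st by auto
  have s0: "\<sigma> \<noteq> 0" using sg by auto
  have kk: "keys (const_poly \<tau> * q) = keys q" using t0 by (rule keys_const_mult)
  have "nonneg (const_poly \<sigma> * eact n \<gamma> (const_poly \<tau> * q)) \<and>
    keys (const_poly \<sigma> * eact n \<gamma> (const_poly \<tau> * q)) =
      {x - Poly_Mapping.single \<beta> 1 + Poly_Mapping.single (g \<beta>) 1 | x \<beta>.
          x \<in> keys (const_poly \<tau> * q) \<and> \<beta> \<in> R \<and> P \<beta> \<and> 0 < lookup x \<beta>}"
    by (rule KL0[OF reg nn _ ef sg]) (use kq kk in auto)
  moreover have "const_poly \<sigma> * eact n \<gamma> (const_poly \<tau> * q) = const_poly (\<sigma> * \<tau>) * eact n \<gamma> q"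
    by (simp only: eact_const mult.assoc[symmetric] const_poly_mult)
  moreover have "\<sigma> * \<tau> = \<tau> * \<sigma>" by (simp add: mult.commute)
  moreover have "keys (const_poly (\<tau> * \<sigma>) * eact n \<gamma> q) = keys (eact n \<gamma> q)"
    using t0 s0 by (simp add: keys_const_mult)
  ultimately show ?thesis using kk by simp
qed

definition reg :: "nat \<Rightarrow> nat \<Rightarrow> root set" where
  "reg i j = {(k, l). i \<le> k \<and> k \<le> l \<and> l \<le> j}"

lemma finite_reg: "finite (reg i j)"
proof -
  have "reg i j \<subseteq> {0..j} \<times> {0..j}" by (auto simp: reg_def)
  then show ?thesis by (rule finite_subset) auto
qed

lemma reg_Rplus: "1 \<le> i \<Longrightarrow> j \<le> n - 1 \<Longrightarrow> reg i j \<subseteq> Rplus n"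
  by (auto simp: reg_def Rplus_def)

lemma ef_A:
  assumes "1 \<le> i" "i < k"
  shows "\<forall>\<beta>\<in>reg i j. e_on_f (i, k - 1) \<beta> =
     (if fst \<beta> = i \<and> k \<le> snd \<beta> then const_poly (-1) * fvar (k, snd \<beta>) else 0)"
  using assms by (auto simp: reg_def e_on_f_def const_poly_minus_one)

lemma ef_B:
  assumes "i \<le> l" "l < j"
  shows "\<forall>\<beta>\<in>reg i j. e_on_f (l + 1, j) \<beta> =
     (if snd \<beta> = j \<and> fst \<beta> \<le> l then const_poly 1 * fvar (fst \<beta>, l) else 0)"
  using assms by (auto simp: reg_def e_on_f_def const_poly_one)

definition rowsum :: "nat \<Rightarrow> nat \<Rightarrow> mono \<Rightarrow> nat \<Rightarrow> nat" where
  "rowsum i j x k = (\<Sum>c\<in>{c\<in>reg i j. fst c = k}. lookup x c)"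
definition colsum :: "nat \<Rightarrow> nat \<Rightarrow> mono \<Rightarrow> nat \<Rightarrow> nat" where
  "colsum i j x l = (\<Sum>c\<in>{c\<in>reg i j. snd c = l}. lookup x c)"
definition tot :: "nat \<Rightarrow> nat \<Rightarrow> mono \<Rightarrow> nat" where
  "tot i j x = (\<Sum>c\<in>reg i j. lookup x c)"

lemma move_sum:
  fixes x :: mono
  assumes "finite A" "0 < lookup x \<beta>"
  shows "(\<Sum>c\<in>A. lookup (x - Poly_Mapping.single \<beta> 1 + Poly_Mapping.single \<gamma> 1) c) + (if \<beta> \<in> A then 1 else 0)
       = (\<Sum>c\<in>A. lookup x c) + (if \<gamma> \<in> A then 1 else 0)"
proof -
  have pw: "lookup (x - Poly_Mapping.single \<beta> 1 + Poly_Mapping.single \<gamma> 1) c + (if c = \<beta> then 1 else 0)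
      = lookup x c + (if c = \<gamma> then 1 else 0)" for c
    using assms(2) by (auto simp: lookup_add lookup_minus lookup_single when_def)
  have "(\<Sum>c\<in>A. lookup (x - Poly_Mapping.single \<beta> 1 + Poly_Mapping.single \<gamma> 1) c + (if c = \<beta> then 1 else 0))
      = (\<Sum>c\<in>A. lookup x c + (if c = \<gamma> then 1 else 0))"
    using pw by simp
  then show ?thesis using assms(1) by (simp add: sum.distrib)
qed

definition Inv :: "nat \<Rightarrow> nat \<Rightarrow> nat \<Rightarrow> root list \<Rightarrow> mono \<Rightarrow> bool" where
  "Inv i j N os x \<longleftrightarrow> keys x \<subseteq> reg i j \<and>
     (\<forall>k. i < k \<and> k \<le> j \<longrightarrow> rowsum i j x k = count_list os (i, k - 1)) \<and>
     (\<forall>l. i \<le> l \<and> l < j \<longrightarrow> colsum i j x l = count_list os (l + 1, j)) \<and>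
     tot i j x = N"

lemma InvD:
  assumes "Inv i j N os x"
  shows "keys x \<subseteq> reg i j"
    "\<And>k. i < k \<Longrightarrow> k \<le> j \<Longrightarrow> rowsum i j x k = count_list os (i, k - 1)"
    "\<And>l. i \<le> l \<Longrightarrow> l < j \<Longrightarrow> colsum i j x l = count_list os (l + 1, j)"
    "tot i j x = N"
  using assms unfolding Inv_def by blast+

lemma keys_move: "keys ((x::mono) - Poly_Mapping.single \<beta> 1 + Poly_Mapping.single \<gamma> 1) \<subseteq> keys x \<union> {\<gamma>}"
  by (auto simp: in_keys_iff lookup_add lookup_minus lookup_single when_def split: if_splits)

lemma Inv_A:
  assumes inv: "Inv i j N os x" and k: "i < k" "k \<le> j" and l: "k \<le> l" "l \<le> j"
    and pos: "0 < lookup x (i, l)" and i1: "1 \<le> i"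
  shows "Inv i j N ((i, k - 1) # os) (x - Poly_Mapping.single (i, l) 1 + Poly_Mapping.single (k, l) 1)"
proof -
  let ?x = "x - Poly_Mapping.single (i, l) 1 + Poly_Mapping.single (k, l) 1"
  let ?g = "(i, k - 1)"
  have kr: "(k, l) \<in> reg i j" "(i, l) \<in> reg i j" using k l by (auto simp: reg_def)
  have keys: "keys ?x \<subseteq> reg i j" using keys_move[of x "(i,l)" "(k,l)"] InvD(1)[OF inv] kr by blast
  have row: "rowsum i j ?x k' = count_list ((i, k - 1) # os) (i, k' - 1)" if "i < k'" "k' \<le> j" for k'
  proof -
    have m: "rowsum i j ?x k' + (if (i,l) \<in> {c\<in>reg i j. fst c = k'} then 1 else 0) = rowsum i j x k' + (if (k,l) \<in> {c\<in>reg i j. fst c = k'} then 1 else 0)"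
      unfolding rowsum_def by (rule move_sum) (use pos finite_reg in auto)
    have z1: "(if (i,l) \<in> {c\<in>reg i j. fst c = k'} then 1 else 0) = (0::nat)" using that by auto
    have z2: "(if (k,l) \<in> {c\<in>reg i j. fst c = k'} then 1 else 0) = (if k = k' then 1 else (0::nat))" using kr by auto
    have "rowsum i j ?x k' + 0 = rowsum i j x k' + (if k = k' then 1 else 0)"
      using m unfolding z1 z2 .
    moreover have "(i, k - 1) = (i, k' - 1) \<longleftrightarrow> k = k'" using k that by auto
    ultimately show ?thesis using InvD(2)[OF inv] InvD(3)[OF inv] that by simp
  qed
  have col: "colsum i j ?x l' = count_list ((i, k - 1) # os) (l' + 1, j)" if "i \<le> l'" "l' < j" for l'
  proof -
    have m: "colsum i j ?x l' + (if (i,l) \<in> {c\<in>reg i j. snd c = l'} then 1 else 0) = colsum i j x l' + (if (k,l) \<in> {c\<in>reg i j. snd c = l'} then 1 else 0)"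
      unfolding colsum_def by (rule move_sum) (use pos finite_reg in auto)
    have "(i,l) \<in> {c\<in>reg i j. snd c = l'} \<longleftrightarrow> (k,l) \<in> {c\<in>reg i j. snd c = l'}" using kr by auto
    then have "colsum i j ?x l' = colsum i j x l'" using m by (simp only: add_right_cancel)
    moreover have "(i, k - 1) \<noteq> (l' + 1, j)" using that by auto
    ultimately show ?thesis using InvD(2)[OF inv] InvD(3)[OF inv] that by simp
  qed
  have m: "tot i j ?x + (if (i,l) \<in> reg i j then 1 else 0) = tot i j x + (if (k,l) \<in> reg i j then 1 else 0)"
    unfolding tot_def by (rule move_sum) (use pos finite_reg in auto)
  then have "tot i j ?x = tot i j x" using kr by simp
  then have "tot i j ?x = N" using InvD(4)[OF inv] by simp
  then show ?thesis unfolding Inv_def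
  proof (intro conjI)
    show "keys ?x \<subseteq> reg i j" by (rule keys)
    show "\<forall>k'. i < k' \<and> k' \<le> j \<longrightarrow> rowsum i j ?x k' = count_list (?g # os) (i, k' - 1)"
      using row by blast
    show "\<forall>l'. i \<le> l' \<and> l' < j \<longrightarrow> colsum i j ?x l' = count_list (?g # os) (l' + 1, j)"
      using col by blast
  qed
qed

lemma Inv_B:
  assumes inv: "Inv i j N os x" and l: "i \<le> l" "l < j" and k: "i \<le> k" "k \<le> l"
    and pos: "0 < lookup x (k, j)"
  shows "Inv i j N ((l + 1, j) # os) (x - Poly_Mapping.single (k, j) 1 + Poly_Mapping.single (k, l) 1)"
proof -
  let ?x = "x - Poly_Mapping.single (k, j) 1 + Poly_Mapping.single (k, l) 1"
  let ?g = "(l + 1, j)"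
  have kr: "(k, l) \<in> reg i j" "(k, j) \<in> reg i j" using k l by (auto simp: reg_def)
  have keys: "keys ?x \<subseteq> reg i j" using keys_move[of x "(k,j)" "(k,l)"] InvD(1)[OF inv] kr by blast
  have row: "rowsum i j ?x k' = count_list ((l + 1, j) # os) (i, k' - 1)" if "i < k'" "k' \<le> j" for k'
  proof -
    have m: "rowsum i j ?x k' + (if (k,j) \<in> {c\<in>reg i j. fst c = k'} then 1 else 0) = rowsum i j x k' + (if (k,l) \<in> {c\<in>reg i j. fst c = k'} then 1 else 0)"
      unfolding rowsum_def by (rule move_sum) (use pos finite_reg in auto)
    have "(k,j) \<in> {c\<in>reg i j. fst c = k'} \<longleftrightarrow> (k,l) \<in> {c\<in>reg i j. fst c = k'}" using kr by auto
    then have "rowsum i j ?x k' = rowsum i j x k'" using m by (simp only: add_right_cancel)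
    moreover have "(l + 1, j) \<noteq> (i, k' - 1)" using l by auto
    ultimately show ?thesis using InvD(2)[OF inv] InvD(3)[OF inv] that by simp
  qed
  have col: "colsum i j ?x l' = count_list ((l + 1, j) # os) (l' + 1, j)" if "i \<le> l'" "l' < j" for l'
  proof -
    have m: "colsum i j ?x l' + (if (k,j) \<in> {c\<in>reg i j. snd c = l'} then 1 else 0) = colsum i j x l' + (if (k,l) \<in> {c\<in>reg i j. snd c = l'} then 1 else 0)"
      unfolding colsum_def by (rule move_sum) (use pos finite_reg in auto)
    have z1: "(if (k,j) \<in> {c\<in>reg i j. snd c = l'} then 1 else 0) = (0::nat)" using that by auto
    have z2: "(if (k,l) \<in> {c\<in>reg i j. snd c = l'} then 1 else 0) = (if l = l' then 1 else (0::nat))" using kr by auto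
    have "colsum i j ?x l' + 0 = colsum i j x l' + (if l = l' then 1 else 0)"
      using m unfolding z1 z2 .
    moreover have "(l + 1, j) = (l' + 1, j) \<longleftrightarrow> l = l'" by auto
    ultimately show ?thesis using InvD(2)[OF inv] InvD(3)[OF inv] that by simp
  qed
  have m: "tot i j ?x + (if (k,j) \<in> reg i j then 1 else 0) = tot i j x + (if (k,l) \<in> reg i j then 1 else 0)"
    unfolding tot_def by (rule move_sum) (use pos finite_reg in auto)
  then have "tot i j ?x = tot i j x" using kr by simp
  then have "tot i j ?x = N" using InvD(4)[OF inv] by simp
  then show ?thesis unfolding Inv_def
  proof (intro conjI)
    show "keys ?x \<subseteq> reg i j" by (rule keys)
    show "\<forall>k'. i < k' \<and> k' \<le> j \<longrightarrow> rowsum i j ?x k' = count_list (?g # os) (i, k' - 1)"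
      using row by blast
    show "\<forall>l'. i \<le> l' \<and> l' < j \<longrightarrow> colsum i j ?x l' = count_list (?g # os) (l' + 1, j)"
      using col by blast
  qed
qed



definition NN :: "poly \<Rightarrow> bool" where
  "NN q \<longleftrightarrow> (\<exists>\<tau>. \<tau> * \<tau> = 1 \<and> nonneg (const_poly \<tau> * q))"

lemma step_A:
  assumes nn: "NN q" and kq: "\<forall>x\<in>keys q. keys x \<subseteq> reg i j"
    and i1: "1 \<le> i" and jn: "j \<le> n - 1" and k: "i < k"
  shows "NN (eact n (i, k - 1) q) \<and>
    keys (eact n (i, k - 1) q) = {x - Poly_Mapping.single \<beta> 1 + Poly_Mapping.single (k, snd \<beta>) 1 | x \<beta>.
          x \<in> keys q \<and> \<beta> \<in> reg i j \<and> (fst \<beta> = i \<and> k \<le> snd \<beta>) \<and> 0 < lookup x \<beta>}"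
proof -
  obtain \<tau> where t: "\<tau> * \<tau> = 1" "nonneg (const_poly \<tau> * q)" using nn NN_def by auto
  have "nonneg (const_poly (\<tau> * -1) * eact n (i, k - 1) q) \<and>
    keys (eact n (i, k - 1) q) = {x - Poly_Mapping.single \<beta> 1 + Poly_Mapping.single ((\<lambda>\<beta>. (k, snd \<beta>)) \<beta>) 1 | x \<beta>.
          x \<in> keys q \<and> \<beta> \<in> reg i j \<and> (\<lambda>\<beta>. fst \<beta> = i \<and> k \<le> snd \<beta>) \<beta> \<and> 0 < lookup x \<beta>}"
    by (rule KL[OF reg_Rplus[OF i1 jn] finite_reg t(2) t(1) kq ef_A[OF i1 k]]) simp
  moreover have "(\<tau> * -1) * (\<tau> * -1) = 1" using t by (simp add: algebra_simps)
  ultimately show ?thesis unfolding NN_def by blast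
qed

lemma step_B:
  assumes nn: "NN q" and kq: "\<forall>x\<in>keys q. keys x \<subseteq> reg i j"
    and i1: "1 \<le> i" and jn: "j \<le> n - 1" and l: "i \<le> l" "l < j"
  shows "NN (eact n (l + 1, j) q) \<and>
    keys (eact n (l + 1, j) q) = {x - Poly_Mapping.single \<beta> 1 + Poly_Mapping.single (fst \<beta>, l) 1 | x \<beta>.
          x \<in> keys q \<and> \<beta> \<in> reg i j \<and> (snd \<beta> = j \<and> fst \<beta> \<le> l) \<and> 0 < lookup x \<beta>}"
proof -
  obtain \<tau> where t: "\<tau> * \<tau> = 1" "nonneg (const_poly \<tau> * q)" using nn NN_def by auto
  have "nonneg (const_poly (\<tau> * 1) * eact n (l + 1, j) q) \<and>
    keys (eact n (l + 1, j) q) = {x - Poly_Mapping.single \<beta> 1 + Poly_Mapping.single ((\<lambda>\<beta>. (fst \<beta>, l)) \<beta>) 1 | x \<beta>.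
          x \<in> keys q \<and> \<beta> \<in> reg i j \<and> (\<lambda>\<beta>. snd \<beta> = j \<and> fst \<beta> \<le> l) \<beta> \<and> 0 < lookup x \<beta>}"
    by (rule KL[OF reg_Rplus[OF i1 jn] finite_reg t(2) t(1) kq ef_B[OF l]]) simp
  then have h: "nonneg (const_poly \<tau> * eact n (l + 1, j) q) \<and>
    keys (eact n (l + 1, j) q) = {x - Poly_Mapping.single \<beta> 1 + Poly_Mapping.single (fst \<beta>, l) 1 | x \<beta>.
          x \<in> keys q \<and> \<beta> \<in> reg i j \<and> (snd \<beta> = j \<and> fst \<beta> \<le> l) \<and> 0 < lookup x \<beta>}"
    by (simp only: mult_1_right)
  show ?thesis unfolding NN_def using t(1) h by blast
qed

definition validop :: "nat \<Rightarrow> nat \<Rightarrow> root \<Rightarrow> bool" where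
  "validop i j \<gamma> \<longleftrightarrow> (\<exists>k. i < k \<and> k \<le> j \<and> \<gamma> = (i, k - 1)) \<or> (\<exists>l. i \<le> l \<and> l < j \<and> \<gamma> = (l + 1, j))"

definition start :: "nat \<Rightarrow> nat \<Rightarrow> nat \<Rightarrow> poly" where
  "start i j N = fmon (Poly_Mapping.single (i, j) N)"

lemma sum_single_lookup: "finite A \<Longrightarrow> (\<Sum>c\<in>A. lookup (Poly_Mapping.single a N) c) = (if a \<in> A then N else 0)"
  by (simp add: lookup_single when_def)

lemma Inv_start:
  assumes "i \<le> j"
  shows "\<forall>x\<in>keys (start i j N). Inv i j N [] x"
proof
  fix x assume "x \<in> keys (start i j N)"
  then have x: "x = Poly_Mapping.single (i, j) N" by (simp add: start_def)
  have ij: "(i, j) \<in> reg i j" using assms by (simp add: reg_def)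
  show "Inv i j N [] x" unfolding Inv_def rowsum_def colsum_def tot_def x
    using ij by (auto simp: sum_single_lookup finite_reg)
qed

lemma M:
  assumes i1: "1 \<le> i" and jn: "j \<le> n - 1" and ij: "i \<le> j"
    and v: "\<forall>\<gamma>\<in>set os. validop i j \<gamma>"
  shows "NN (foldr (eact n) os (start i j N)) \<and> (\<forall>x\<in>keys (foldr (eact n) os (start i j N)). Inv i j N os x)"
  using v
proof (induction os)
  case Nil
  have "NN (start i j N)" unfolding NN_def start_def
    by (rule exI[of _ 1]) (simp add: const_poly_one nonneg_fmon)
  then show ?case using Inv_start[OF ij] by simp
next
  case (Cons \<gamma> os)
  let ?q = "foldr (eact n) os (start i j N)"
  have IH: "NN ?q" "\<forall>x\<in>keys ?q. Inv i j N os x" using Cons.IH Cons.prems by simp_all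
  have kq: "\<forall>x\<in>keys ?q. keys x \<subseteq> reg i j" using IH(2) Inv_def by blast
  have "validop i j \<gamma>" using Cons.prems by simp
  then consider (A) k where "i < k" "k \<le> j" "\<gamma> = (i, k - 1)" | (B) l where "i \<le> l" "l < j" "\<gamma> = (l + 1, j)"
    unfolding validop_def by blast
  then show ?case
  proof cases
    case A
    note S = step_A[OF IH(1) kq i1 jn A(1)]
    have "Inv i j N (\<gamma> # os) y" if y_in: "y \<in> keys (eact n \<gamma> ?q)" for y
    proof -
      obtain x \<beta> where xb: "x \<in> keys ?q" "\<beta> \<in> reg i j" "fst \<beta> = i" "k \<le> snd \<beta>" "0 < lookup x \<beta>"
        and y: "y = x - Poly_Mapping.single \<beta> 1 + Poly_Mapping.single (k, snd \<beta>) 1"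
      proof -
        have "y \<in> keys (eact n (i, k - 1) ?q)" using y_in A(3) by simp
        then have "y \<in> {x - Poly_Mapping.single \<beta> 1 + Poly_Mapping.single (k, snd \<beta>) 1 | x \<beta>.
          x \<in> keys ?q \<and> \<beta> \<in> reg i j \<and> (fst \<beta> = i \<and> k \<le> snd \<beta>) \<and> 0 < lookup x \<beta>}"
          using S by simp
        then show ?thesis using that by blast
      qed
      obtain l where b: "\<beta> = (i, l)" using xb(3) by (cases \<beta>) auto
      have lj: "l \<le> j" using xb(2) b by (auto simp: reg_def)
      have kl: "k \<le> l" using xb(4) b by simp
      have ps: "0 < lookup x (i, l)" using xb(5) b by simp
      show ?thesis unfolding y A(3) b snd_conv
        by (rule Inv_A[OF IH(2)[rule_format, OF xb(1)] A(1) A(2) kl lj ps i1])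
    qed
    then show ?thesis using S A(3) by (simp only: foldr_Cons o_apply) blast
  next
    case B
    note S = step_B[OF IH(1) kq i1 jn B(1) B(2)]
    have "Inv i j N (\<gamma> # os) y" if y_in: "y \<in> keys (eact n \<gamma> ?q)" for y
    proof -
      obtain x \<beta> where xb: "x \<in> keys ?q" "\<beta> \<in> reg i j" "snd \<beta> = j" "fst \<beta> \<le> l" "0 < lookup x \<beta>"
        and y: "y = x - Poly_Mapping.single \<beta> 1 + Poly_Mapping.single (fst \<beta>, l) 1"
      proof -
        have "y \<in> keys (eact n (l + 1, j) ?q)" using y_in B(3) by simp
        then have "y \<in> {x - Poly_Mapping.single \<beta> 1 + Poly_Mapping.single (fst \<beta>, l) 1 | x \<beta>.
          x \<in> keys ?q \<and> \<beta> \<in> reg i j \<and> (snd \<beta> = j \<and> fst \<beta> \<le> l) \<and> 0 < lookup x \<beta>}"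
          using S by simp
        then show ?thesis using that by blast
      qed
      obtain k where b: "\<beta> = (k, j)" using xb(3) by (cases \<beta>) auto
      have ik: "i \<le> k" using xb(2) b by (auto simp: reg_def)
      have kl: "k \<le> l" using xb(4) b by simp
      have ps: "0 < lookup x (k, j)" using xb(5) b by simp
      show ?thesis unfolding y B(3) b fst_conv
        by (rule Inv_B[OF IH(2)[rule_format, OF xb(1)] B(1) B(2) ik kl ps])
    qed
    then show ?thesis using S B(3) by (simp only: foldr_Cons o_apply) blast
  qed
qed



definition mless :: "nat \<Rightarrow> mono \<Rightarrow> mono \<Rightarrow> bool" where
  "mless n x y \<longleftrightarrow> (\<exists>c\<in>Rplus n. lookup x c < lookup y c \<and> (\<forall>c'\<in>Rplus n. c' < c \<longrightarrow> lookup x c' = lookup y c'))"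

lemma mless_add: "mless n x y \<Longrightarrow> mless n (u + x) (u + y)"
  unfolding mless_def by (auto simp: lookup_add)

definition enc :: "nat \<Rightarrow> mono \<Rightarrow> nat list" where
  "enc n x = map (lookup x) (sorted_list_of_set (Rplus n))"

lemma mless_lex: assumes "mless n x y" shows "(enc n x, enc n y) \<in> lex less_than"
proof -
  let ?L = "sorted_list_of_set (Rplus n)"
  obtain c where c: "c \<in> Rplus n" "lookup x c < lookup y c"
    and eq: "\<forall>c'\<in>Rplus n. c' < c \<longrightarrow> lookup x c' = lookup y c'"
    using assms mless_def by blast
  have sL: "set ?L = Rplus n" using finite_Rplus by simp
  have st: "sorted_wrt (<) ?L" by (rule strict_sorted_list_of_set)
  obtain t where t: "t < length ?L" "?L ! t = c" using c(1) sL by (metis in_set_conv_nth)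
  have tk: "take t (enc n x) = take t (enc n y)"
  proof (rule nth_equalityI)
    show "length (take t (enc n x)) = length (take t (enc n y))" by (simp add: enc_def)
    fix t' assume "t' < length (take t (enc n x))"
    then have t': "t' < t" "t < length ?L" using t by (auto simp: enc_def)
    then have "?L ! t' < c" using st t by (metis sorted_wrt_nth_less)
    moreover have "?L ! t' \<in> Rplus n" using t' sL by (metis nth_mem order.strict_trans)
    ultimately show "take t (enc n x) ! t' = take t (enc n y) ! t'"
      using eq t' by (simp add: enc_def)
  qed
  have "(enc n x, enc n y) \<in> lexord less_than"
    unfolding lexord_take_index_conv
    using tk t c(2) by (auto simp: enc_def intro!: exI[of _ t])
  then show ?thesis by (simp add: lexord_lex enc_def)
qed

lemma wf_mless: "wf {(x, y). mless n x y}"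
proof (rule wf_subset)
  show "wf (inv_image (lex less_than) (enc n))" by (rule wf_inv_image) (rule wf_lex, rule wf_less_than)
  show "{(x, y). mless n x y} \<subseteq> inv_image (lex less_than) (enc n)"
    using mless_lex by auto
qed

lemma tot_rows:
  assumes "i \<le> j"
  shows "tot i j x = rowsum i j x i + (\<Sum>k\<in>{i<..j}. rowsum i j x k)"
proof -
  have "tot i j x = (\<Sum>k\<in>{i..j}. rowsum i j x k)"
    unfolding tot_def rowsum_def
    by (rule sum.group[symmetric], rule finite_reg, simp, auto simp: reg_def)
  also have "{i..j} = insert i {i<..j}" using assms by auto
  finally show ?thesis by simp
qed

lemma tot_cols:
  assumes "i \<le> j"
  shows "tot i j x = colsum i j x j + (\<Sum>l\<in>{i..<j}. colsum i j x l)"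
proof -
  have "tot i j x = (\<Sum>l\<in>{i..j}. colsum i j x l)"
    unfolding tot_def colsum_def
    by (rule sum.group[symmetric], rule finite_reg, simp, auto simp: reg_def)
  also have "{i..j} = insert j {i..<j}" using assms by auto
  finally show ?thesis by simp
qed

definition feasible :: "nat \<Rightarrow> nat \<Rightarrow> mono \<Rightarrow> mono \<Rightarrow> bool" where
  "feasible i j s x \<longleftrightarrow> keys x \<subseteq> reg i j \<and> (\<forall>k. rowsum i j x k = rowsum i j s k) \<and> (\<forall>l. colsum i j x l = colsum i j s l)"

lemma rowsum_out: "\<not> (i \<le> k \<and> k \<le> j) \<Longrightarrow> rowsum i j x k = 0"
  unfolding rowsum_def reg_def by (rule sum.neutral) auto
lemma colsum_out: "\<not> (i \<le> l \<and> l \<le> j) \<Longrightarrow> colsum i j x l = 0"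
  unfolding colsum_def reg_def by (rule sum.neutral) auto

lemma feasibleI:
  assumes ij: "i \<le> j" and kx: "keys x \<subseteq> reg i j"
    and r: "\<forall>k. i < k \<and> k \<le> j \<longrightarrow> rowsum i j x k = rowsum i j s k"
    and c: "\<forall>l. i \<le> l \<and> l < j \<longrightarrow> colsum i j x l = colsum i j s l"
    and t: "tot i j x = tot i j s"
  shows "feasible i j s x"
proof -
  have "(\<Sum>k\<in>{i<..j}. rowsum i j x k) = (\<Sum>k\<in>{i<..j}. rowsum i j s k)"
    using r by (intro sum.cong) auto
  then have ri: "rowsum i j x i = rowsum i j s i" using t tot_rows[OF ij, of x] tot_rows[OF ij, of s] by simp
  have "(\<Sum>l\<in>{i..<j}. colsum i j x l) = (\<Sum>l\<in>{i..<j}. colsum i j s l)"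
    using c by (intro sum.cong) auto
  then have cj: "colsum i j x j = colsum i j s j" using t tot_cols[OF ij, of x] tot_cols[OF ij, of s] by simp
  have "rowsum i j x k = rowsum i j s k" for k
    using r ri rowsum_out[of i k j] by (cases "i < k \<and> k \<le> j"; cases "k = i") auto
  moreover have "colsum i j x l = colsum i j s l" for l
    using c cj colsum_out[of i l j] by (cases "i \<le> l \<and> l < j"; cases "l = j") auto
  ultimately show ?thesis using kx unfolding feasible_def by blast
qed

lemma sum_eq_le_imp_eq:
  fixes f g :: "'a \<Rightarrow> nat"
  assumes "finite A" "\<forall>a\<in>A. f a \<le> g a" "sum f A = sum g A" "a \<in> A"
  shows "f a = g a"
proof (rule ccontr)
  assume "f a \<noteq> g a"
  then have "f a < g a" using assms by force
  then have "sum f A < sum g A" using assms by (intro sum_strict_mono_ex1) auto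
  then show False using assms by simp
qed

lemma keys_out: "keys (x::mono) \<subseteq> A \<Longrightarrow> c \<notin> A \<Longrightarrow> lookup x c = 0"
  by (auto simp: in_keys_iff)

lemma feasible_le_eq:
  assumes f: "feasible i j s y" and ks: "keys s \<subseteq> reg i j"
    and le: "\<forall>c. fst c \<noteq> i \<longrightarrow> lookup y c \<le> lookup s c"
  shows "y = s"
proof (rule poly_mapping_eqI)
  fix c
  have ky: "keys y \<subseteq> reg i j" using f feasible_def by blast
  have rowc: "lookup y c = lookup s c" if c: "c \<in> reg i j" "fst c \<noteq> i" for c
  proof -
    let ?A = "{c'\<in>reg i j. fst c' = fst c}"
    have "sum (lookup y) ?A = sum (lookup s) ?A" using f unfolding feasible_def rowsum_def by blast
    then show ?thesis
      using sum_eq_le_imp_eq[of ?A "lookup y" "lookup s" c] le c finite_reg by auto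
  qed
  show "lookup y c = lookup s c"
  proof (cases "c \<in> reg i j")
    case False then show ?thesis using ky ks keys_out by metis
  next
    case True
    show ?thesis
    proof (cases "fst c = i")
      case False then show ?thesis using rowc True by blast
    next
      case ci: True
      let ?C = "{c'\<in>reg i j. snd c' = snd c}"
      have fC: "finite ?C" using finite_reg by simp
      have cC: "c \<in> ?C" using True by simp
      have "sum (lookup y) ?C = sum (lookup s) ?C" using f unfolding feasible_def colsum_def by blast
      moreover have "sum (lookup y) (?C - {c}) = sum (lookup s) (?C - {c})"
      proof (rule sum.cong)
        fix c' assume c': "c' \<in> ?C - {c}"
        then have "fst c' \<noteq> i" using ci by (auto simp: prod_eq_iff)
        then show "lookup y c' = lookup s c'" using rowc c' by blast
      qed simp
      ultimately show ?thesis
        using sum.remove[OF fC cC, of "lookup y"] sum.remove[OF fC cC, of "lookup s"] by simp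
    qed
  qed
qed

definition chain :: "mono \<Rightarrow> bool" where
  "chain s \<longleftrightarrow> (\<forall>c1\<in>keys s. \<forall>c2\<in>keys s. (fst c1 \<le> fst c2 \<and> snd c1 \<le> snd c2) \<or> (fst c2 \<le> fst c1 \<and> snd c2 \<le> snd c1))"

lemma sum_split3:
  fixes f :: "'a \<Rightarrow> nat"
  assumes "finite A" "c \<in> A" "A - {c} = A1 \<union> A2" "A1 \<inter> A2 = {}"
  shows "sum f A = sum f A1 + f c + sum f A2"
proof -
  have "finite A1" "finite A2" using assms by (metis finite_Diff finite_Un)+
  then have "sum f (A - {c}) = sum f A1 + sum f A2" using assms by (simp add: sum.union_disjoint)
  then show ?thesis using sum.remove[OF assms(1,2), of f] by simp
qed

lemma feasible_lex:
  assumes f: "feasible i j s x" and ks: "keys s \<subseteq> reg i j" and ch: "chain s"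
    and sub: "reg i j \<subseteq> Rplus n" and ne: "x \<noteq> s"
  shows "mless n x s"
proof -
  have kx: "keys x \<subseteq> reg i j" using f feasible_def by blast
  define D where "D = {c\<in>reg i j. lookup x c \<noteq> lookup s c}"
  have fD: "finite D" using finite_reg D_def by simp
  have "D \<noteq> {}"
  proof
    assume "D = {}"
    then have "lookup x c = lookup s c" for c
      using kx ks keys_out unfolding D_def by (cases "c \<in> reg i j") (blast, metis)
    then show False using ne poly_mapping_eqI by blast
  qed
  define c where "c = Min D"
  have cD: "c \<in> D" using fD \<open>D \<noteq> {}\<close> c_def by simp
  have cr: "c \<in> reg i j" using cD D_def by simp
  have before: "lookup x c' = lookup s c'" if "c' < c" for c'
  proof (cases "c' \<in> reg i j")
    case True
    then have "c' \<notin> D" using that c_def fD Min_le by (metis leD)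
    then show ?thesis using True D_def by simp
  next
    case False then show ?thesis using kx ks keys_out by metis
  qed
  obtain k l where c_eq: "c = (k, l)" by (cases c)
  have le: "lookup x c \<le> lookup s c"
  proof -
    have "(\<forall>c''\<in>reg i j. fst c'' = k \<and> l < snd c'' \<longrightarrow> lookup s c'' = 0) \<or>
          (\<forall>c''\<in>reg i j. snd c'' = l \<and> k < fst c'' \<longrightarrow> lookup s c'' = 0)"
    proof (rule ccontr)
      assume "\<not> ?thesis"
      then obtain c1 c2 where h: "c1 \<in> reg i j" "fst c1 = k" "l < snd c1" "lookup s c1 \<noteq> 0"
        "c2 \<in> reg i j" "snd c2 = l" "k < fst c2" "lookup s c2 \<noteq> 0" by blast
      then have "c1 \<in> keys s" "c2 \<in> keys s" by (simp_all add: in_keys_iff)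
      then have "(fst c1 \<le> fst c2 \<and> snd c1 \<le> snd c2) \<or> (fst c2 \<le> fst c1 \<and> snd c2 \<le> snd c1)"
        using ch unfolding chain_def by blast
      then show False using h by linarith
    qed
    then show ?thesis
    proof
      assume A: "\<forall>c''\<in>reg i j. fst c'' = k \<and> l < snd c'' \<longrightarrow> lookup s c'' = 0"
      let ?R = "{c'\<in>reg i j. fst c' = k}"
      let ?R1 = "{c'\<in>reg i j. fst c' = k \<and> snd c' < l}"
      let ?R2 = "{c'\<in>reg i j. fst c' = k \<and> l < snd c'}"
      have sp: "sum g ?R = sum g ?R1 + g c + sum g ?R2" for g :: "root \<Rightarrow> nat"
        by (rule sum_split3) (use finite_reg cr c_eq in \<open>auto\<close>)
      have "sum (lookup x) ?R1 = sum (lookup s) ?R1"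
        by (rule sum.cong) (use before c_eq in \<open>auto simp: less_prod_def'\<close>)
      moreover have "sum (lookup s) ?R2 = 0" using A by simp
      moreover have "sum (lookup x) ?R = sum (lookup s) ?R" using f unfolding feasible_def rowsum_def by blast
      ultimately show ?thesis using sp[of "lookup x"] sp[of "lookup s"] by simp
    next
      assume B: "\<forall>c''\<in>reg i j. snd c'' = l \<and> k < fst c'' \<longrightarrow> lookup s c'' = 0"
      let ?R = "{c'\<in>reg i j. snd c' = l}"
      let ?R1 = "{c'\<in>reg i j. snd c' = l \<and> fst c' < k}"
      let ?R2 = "{c'\<in>reg i j. snd c' = l \<and> k < fst c'}"
      have sp: "sum g ?R = sum g ?R1 + g c + sum g ?R2" for g :: "root \<Rightarrow> nat"
        by (rule sum_split3) (use finite_reg cr c_eq in \<open>auto\<close>)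
      have "sum (lookup x) ?R1 = sum (lookup s) ?R1"
        by (rule sum.cong) (use before c_eq in \<open>auto simp: less_prod_def'\<close>)
      moreover have "sum (lookup s) ?R2 = 0" using B by simp
      moreover have "sum (lookup x) ?R = sum (lookup s) ?R" using f unfolding feasible_def colsum_def by blast
      ultimately show ?thesis using sp[of "lookup x"] sp[of "lookup s"] by simp
    qed
  qed
  then have lt: "lookup x c < lookup s c" using cD D_def by auto
  show ?thesis unfolding mless_def
  proof (intro bexI conjI ballI impI)
    show "c \<in> Rplus n" using cr sub by blast
    show "lookup x c < lookup s c" by (rule lt)
    fix c' assume "c' \<in> Rplus n" "c' < c"
    then show "lookup x c' = lookup s c'" using before by blast
  qed
qed



lemma M_foldr_keys:
  assumes "1 \<le> i" "j \<le> n - 1" "i \<le> j" "\<forall>\<gamma>\<in>set os. validop i j \<gamma>"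
  shows "NN (foldr (eact n) os (start i j N))" "\<forall>x\<in>keys (foldr (eact n) os (start i j N)). keys x \<subseteq> reg i j"
  using M[OF assms] Inv_def by blast+

lemma WB:
  assumes i1: "1 \<le> i" and jn: "j \<le> n - 1" and ij: "i \<le> j" and N0: "0 < N"
    and vB: "\<forall>\<gamma>\<in>set Bs. \<exists>l. i \<le> l \<and> l < j \<and> \<gamma> = (l + 1, j)"
    and cnt: "\<forall>l. i \<le> l \<and> l < j \<longrightarrow> count_list Bs (l + 1, j) \<le> b l"
    and bsum: "(\<Sum>l\<in>{i..<j}. b l) \<le> N"
  shows "\<exists>y\<in>keys (foldr (eact n) Bs (start i j N)). keys y \<subseteq> {c. fst c = i} \<and>
           lookup y (i, j) + (\<Sum>l\<in>{i..<j}. count_list Bs (l + 1, j)) = N"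
  using vB cnt
proof (induction Bs)
  case Nil
  have "Poly_Mapping.single (i, j) N \<in> keys (start i j N)" by (simp add: start_def)
  moreover have "keys (Poly_Mapping.single (i, j) N) \<subseteq> {c. fst c = i}" by simp
  ultimately show ?case by force
next
  case (Cons \<gamma> Bs)
  obtain l0 where l0: "i \<le> l0" "l0 < j" "\<gamma> = (l0 + 1, j)" using Cons.prems(1) by auto
  have cs: "count_list (\<gamma> # Bs) (l + 1, j) = count_list Bs (l + 1, j) + (if l = l0 then 1 else 0)" for l
    using l0 by auto
  have cnt': "\<forall>l. i \<le> l \<and> l < j \<longrightarrow> count_list Bs (l + 1, j) \<le> b l"
  proof (intro allI impI)
    fix l assume "i \<le> l \<and> l < j"
    then have "count_list (\<gamma> # Bs) (l + 1, j) \<le> b l" using Cons.prems(2) by blast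
    then show "count_list Bs (l + 1, j) \<le> b l" using cs[of l] by linarith
  qed
  obtain y where y: "y \<in> keys (foldr (eact n) Bs (start i j N))" "keys y \<subseteq> {c. fst c = i}"
     "lookup y (i, j) + (\<Sum>l\<in>{i..<j}. count_list Bs (l + 1, j)) = N"
    using Cons.IH Cons.prems(1) cnt' by auto
  let ?q = "foldr (eact n) Bs (start i j N)"
  have vq: "\<forall>\<gamma>\<in>set Bs. validop i j \<gamma>" using Cons.prems(1) unfolding validop_def by auto
  note MQ = M_foldr_keys[OF i1 jn ij vq, of N]
  have sumc: "(\<Sum>l\<in>{i..<j}. count_list (\<gamma> # Bs) (l + 1, j)) = (\<Sum>l\<in>{i..<j}. count_list Bs (l + 1, j)) + 1"
    unfolding cs sum.distrib using l0 by simp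
  have "(\<Sum>l\<in>{i..<j}. count_list (\<gamma> # Bs) (l + 1, j)) \<le> (\<Sum>l\<in>{i..<j}. b l)"
    by (rule sum_mono) (use Cons.prems(2) in auto)
  then have pos: "0 < lookup y (i, j)" using y(3) sumc bsum by linarith
  let ?y = "y - Poly_Mapping.single (i, j) 1 + Poly_Mapping.single (i, l0) 1"
  note S = step_B[OF MQ(1) MQ(2) i1 jn l0(1) l0(2)]
  have ijr: "(i, j) \<in> reg i j" using ij by (simp add: reg_def)
  have "?y \<in> keys (eact n (l0 + 1, j) ?q)"
    unfolding S[THEN conjunct2]
    using y(1) ijr l0 pos by (intro CollectI exI[of _ y] exI[of _ "(i, j)"]) simp
  then have yk: "?y \<in> keys (foldr (eact n) (\<gamma> # Bs) (start i j N))" using l0(3) by simp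
  have "keys ?y \<subseteq> {c. fst c = i}" using keys_move[of y "(i,j)" "(i,l0)"] y(2) by auto
  moreover have "lookup ?y (i, j) = lookup y (i, j) - 1"
    using l0 by (simp add: lookup_add lookup_minus lookup_single when_def)
  ultimately show ?case using yk y(3) sumc pos by (intro bexI[of _ ?y]) simp_all
qed

lemma col_split:
  assumes "(a, l) \<in> reg i j"
  shows "colsum i j x l = lookup x (a, l) + sum (lookup x) ({c\<in>reg i j. snd c = l} - {(a, l)})"
  unfolding colsum_def by (rule sum.remove) (use assms finite_reg in auto)

lemma WA:
  assumes i1: "1 \<le> i" and jn: "j \<le> n - 1" and ij: "i \<le> j"
    and vA: "\<forall>\<gamma>\<in>set As. \<exists>k. i < k \<and> k \<le> j \<and> \<gamma> = (i, k - 1)"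
    and vB: "\<forall>\<gamma>\<in>set Bs. \<exists>l. i \<le> l \<and> l < j \<and> \<gamma> = (l + 1, j)"
    and cntA: "\<forall>k. i < k \<and> k \<le> j \<longrightarrow> count_list As (i, k - 1) \<le> rowsum i j s k"
    and y0: "y0 \<in> keys (foldr (eact n) Bs (start i j N))"
      "\<forall>c. fst c \<noteq> i \<longrightarrow> lookup y0 c \<le> lookup s c" "\<forall>l. colsum i j s l \<le> colsum i j y0 l"
  shows "\<exists>y\<in>keys (foldr (eact n) As (foldr (eact n) Bs (start i j N))).
           (\<forall>c. fst c \<noteq> i \<longrightarrow> lookup y c \<le> lookup s c) \<and> (\<forall>l. colsum i j s l \<le> colsum i j y l)"
  using vA cntA
proof (induction As)
  case Nil then show ?case using y0 by auto
next
  case (Cons \<gamma> As)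
  obtain k0 where k0: "i < k0" "k0 \<le> j" "\<gamma> = (i, k0 - 1)" using Cons.prems(1) by auto
  have cs: "count_list (\<gamma> # As) (i, k - 1) = count_list As (i, k - 1) + (if k = k0 then 1 else 0)"
    if "i < k" for k using k0 that by auto
  have cnt': "\<forall>k. i < k \<and> k \<le> j \<longrightarrow> count_list As (i, k - 1) \<le> rowsum i j s k"
  proof (intro allI impI)
    fix k assume a: "i < k \<and> k \<le> j"
    then have "count_list (\<gamma> # As) (i, k - 1) \<le> rowsum i j s k" using Cons.prems(2) by blast
    then show "count_list As (i, k - 1) \<le> rowsum i j s k" using cs[of k] a by linarith
  qed
  obtain y where y: "y \<in> keys (foldr (eact n) As (foldr (eact n) Bs (start i j N)))"
     "\<forall>c. fst c \<noteq> i \<longrightarrow> lookup y c \<le> lookup s c" "\<forall>l. colsum i j s l \<le> colsum i j y l"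
    using Cons.IH Cons.prems(1) cnt' by auto
  let ?q = "foldr (eact n) (As @ Bs) (start i j N)"
  have qe: "foldr (eact n) As (foldr (eact n) Bs (start i j N)) = ?q" by simp
  have yq: "y \<in> keys ?q" using y(1) unfolding qe .
  have vq: "\<forall>\<gamma>\<in>set (As @ Bs). validop i j \<gamma>" using Cons.prems(1) vB unfolding validop_def by auto
  note MQ = M_foldr_keys[OF i1 jn ij vq, of N]
  have invy: "Inv i j N (As @ Bs) y" using M[OF i1 jn ij vq, of N] yq by blast
  have cB: "count_list Bs (i, k0 - 1) = 0" unfolding count_list_0_iff using vB k0 by auto
  have "rowsum i j y k0 = count_list As (i, k0 - 1)" using InvD(2)[OF invy k0(1) k0(2)] cB by simp
  also have "\<dots> < rowsum i j s k0" using Cons.prems(2) k0 cs[OF k0(1)] by auto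
  finally have rlt: "rowsum i j y k0 < rowsum i j s k0" .
  obtain c where c: "c \<in> reg i j" "fst c = k0" "lookup y c < lookup s c"
  proof (rule ccontr)
    assume "\<not> thesis"
    then have "\<forall>c\<in>{c\<in>reg i j. fst c = k0}. lookup s c \<le> lookup y c" using that by force
    then have "rowsum i j s k0 \<le> rowsum i j y k0" unfolding rowsum_def by (intro sum_mono) auto
    then show False using rlt by simp
  qed
  obtain l where cl: "c = (k0, l)" using c(2) by (cases c) auto
  have kl: "k0 \<le> l" "l \<le> j" using c(1) cl by (auto simp: reg_def)
  have ilr: "(i, l) \<in> reg i j" using kl k0 by (simp add: reg_def)
  let ?C = "{c\<in>reg i j. snd c = l} - {(i, l)}"
  have "sum (lookup y) ?C < sum (lookup s) ?C"
  proof (rule sum_strict_mono_ex1)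
    show "finite ?C" using finite_reg by simp
    show "\<forall>x\<in>?C. lookup y x \<le> lookup s x"
    proof
      fix x assume "x \<in> ?C"
      then have "fst x \<noteq> i" by (auto simp: prod_eq_iff)
      then show "lookup y x \<le> lookup s x" using y(2) by blast
    qed
    show "\<exists>a\<in>?C. lookup y a < lookup s a" using c cl k0 by (intro bexI[of _ c]) auto
  qed
  moreover have "colsum i j s l \<le> colsum i j y l" using y(3) by blast
  ultimately have "lookup s (i, l) < lookup y (i, l)"
    using col_split[OF ilr, of y] col_split[OF ilr, of s] by linarith
  then have pos: "0 < lookup y (i, l)" by simp
  let ?y = "y - Poly_Mapping.single (i, l) 1 + Poly_Mapping.single (k0, l) 1"
  note S = step_A[OF MQ(1) MQ(2) i1 jn k0(1)]
  have "?y \<in> keys (eact n (i, k0 - 1) ?q)"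
    unfolding S[THEN conjunct2]
    using yq ilr kl pos by (intro CollectI exI[of _ y] exI[of _ "(i, l)"]) simp
  then have yk: "?y \<in> keys (foldr (eact n) (\<gamma> # As) (foldr (eact n) Bs (start i j N)))"
    using k0(3) qe by (simp only: foldr_Cons o_apply)
  have le: "\<forall>c. fst c \<noteq> i \<longrightarrow> lookup ?y c \<le> lookup s c"
  proof (intro allI impI)
    fix c' :: root assume "fst c' \<noteq> i"
    then have e: "lookup ?y c' = lookup y c' + (if c' = (k0, l) then 1 else 0)"
      by (auto simp: lookup_add lookup_minus lookup_single when_def)
    show "lookup ?y c' \<le> lookup s c'"
    proof (cases "c' = (k0, l)")
      case True then show ?thesis using e c(3) cl by simp
    next
      case False
      have "lookup y c' \<le> lookup s c'" using y(2) \<open>fst c' \<noteq> i\<close> by blast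
      then show ?thesis using e False by simp
    qed
  qed
  have colq: "colsum i j ?y l' = colsum i j y l'" for l'
  proof -
    have m: "colsum i j ?y l' + (if (i,l) \<in> {c\<in>reg i j. snd c = l'} then 1 else 0) = colsum i j y l' + (if (k0,l) \<in> {c\<in>reg i j. snd c = l'} then 1 else 0)"
      unfolding colsum_def by (rule move_sum) (use pos finite_reg in auto)
    have "(i,l) \<in> {c\<in>reg i j. snd c = l'} \<longleftrightarrow> (k0,l) \<in> {c\<in>reg i j. snd c = l'}"
      using ilr c(1) cl by auto
    then show ?thesis using m by (simp only: add_right_cancel)
  qed
  show ?case using yk le colq y(3) by (intro bexI[of _ ?y]) simp_all
qed



definition Bops :: "nat \<Rightarrow> nat \<Rightarrow> mono \<Rightarrow> root list" where
  "Bops i j s = concat (map (\<lambda>l. replicate (colsum i j s l) (l + 1, j)) [i..<j])"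
definition Aops :: "nat \<Rightarrow> nat \<Rightarrow> mono \<Rightarrow> root list" where
  "Aops i j s = concat (map (\<lambda>k. replicate (rowsum i j s k) (i, k - 1)) [Suc i..<Suc j])"

lemma count_rep: "count_list (replicate m b) a = (if b = a then m else 0)"
  by (induction m) auto

lemma count_concat_map: "count_list (concat (map h xs)) a = sum_list (map (\<lambda>x. count_list (h x) a) xs)"
  by (induction xs) auto

lemma count_Bops: assumes "i \<le> l0" "l0 < j"
  shows "count_list (Bops i j s) (l0 + 1, j) = colsum i j s l0"
proof -
  have "count_list (Bops i j s) (l0 + 1, j) = (\<Sum>l\<in>{i..<j}. if l0 = l then colsum i j s l else 0)"
    unfolding Bops_def count_concat_map count_rep interv_sum_list_conv_sum_set_nat
    by (intro sum.cong) auto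
  then show ?thesis using assms by simp
qed

lemma count_Aops: assumes "i < k0" "k0 \<le> j"
  shows "count_list (Aops i j s) (i, k0 - 1) = rowsum i j s k0"
proof -
  have "count_list (Aops i j s) (i, k0 - 1) = (\<Sum>k\<in>{Suc i..<Suc j}. if k0 = k then rowsum i j s k else 0)"
    unfolding Aops_def count_concat_map count_rep interv_sum_list_conv_sum_set_nat
    using assms by (intro sum.cong) auto
  then show ?thesis using assms by simp
qed

lemma set_Bops: "\<forall>\<gamma>\<in>set (Bops i j s). \<exists>l. i \<le> l \<and> l < j \<and> \<gamma> = (l + 1, j)"
  unfolding Bops_def by (auto split: if_splits)

lemma set_Aops: "\<forall>\<gamma>\<in>set (Aops i j s). \<exists>k. i < k \<and> k \<le> j \<and> \<gamma> = (i, k - 1)"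
proof
  fix \<gamma> assume "\<gamma> \<in> set (Aops i j s)"
  then obtain k where "k \<in> {Suc i..<Suc j}" "\<gamma> = (i, k - 1)" unfolding Aops_def by (auto simp del: upt_Suc split: if_splits)
  then show "\<exists>k. i < k \<and> k \<le> j \<and> \<gamma> = (i, k - 1)" by (intro exI[of _ k]) auto
qed

lemma count_Bops_A: "i < k \<Longrightarrow> count_list (Bops i j s) (i, k - 1) = 0"
  unfolding count_list_0_iff using set_Bops[of i j s] by auto

lemma count_Aops_B: "i \<le> l \<Longrightarrow> count_list (Aops i j s) (l + 1, j) = 0"
  unfolding count_list_0_iff using set_Aops[of i j s] by auto

lemma FIN:
  assumes i1: "1 \<le> i" and jn: "j \<le> n - 1" and ij: "i \<le> j"
    and ks: "keys s \<subseteq> reg i j" and ch: "chain s" and N0: "0 < N" and ts: "tot i j s = N"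
  shows "NN (foldr (eact n) (Aops i j s @ Bops i j s) (start i j N)) \<and>
     s \<in> keys (foldr (eact n) (Aops i j s @ Bops i j s) (start i j N)) \<and>
     (\<forall>x\<in>keys (foldr (eact n) (Aops i j s @ Bops i j s) (start i j N)). x = s \<or> mless n x s) \<and>
     (\<forall>\<gamma>\<in>set (Aops i j s @ Bops i j s). validop i j \<gamma>)"
proof -
  let ?os = "Aops i j s @ Bops i j s"
  let ?R = "foldr (eact n) ?os (start i j N)"
  have v: "\<forall>\<gamma>\<in>set ?os. validop i j \<gamma>"
    using set_Aops[of i j s] set_Bops[of i j s] unfolding validop_def by auto
  note MR = M[OF i1 jn ij v, of N]
  have feas: "feasible i j s x" if "x \<in> keys ?R" for x
  proof -
    have inv: "Inv i j N ?os x" using MR that by blast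
    show ?thesis
    proof (rule feasibleI[OF ij InvD(1)[OF inv]])
      show "\<forall>k. i < k \<and> k \<le> j \<longrightarrow> rowsum i j x k = rowsum i j s k"
        using InvD(2)[OF inv] count_Aops count_Bops_A by simp
      show "\<forall>l. i \<le> l \<and> l < j \<longrightarrow> colsum i j x l = colsum i j s l"
        using InvD(3)[OF inv] count_Bops count_Aops_B by simp
      show "tot i j x = tot i j s" using InvD(4)[OF inv] ts by simp
    qed
  qed
  have sub: "reg i j \<subseteq> Rplus n" by (rule reg_Rplus[OF i1 jn])
  have lexp: "\<forall>x\<in>keys ?R. x = s \<or> mless n x s"
    using feas feasible_lex[OF _ ks ch sub] by blast
  have bsum: "(\<Sum>l\<in>{i..<j}. colsum i j s l) \<le> N" using tot_cols[OF ij, of s] ts by simp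
  obtain y0 where y0: "y0 \<in> keys (foldr (eact n) (Bops i j s) (start i j N))" "keys y0 \<subseteq> {c. fst c = i}"
     "lookup y0 (i, j) + (\<Sum>l\<in>{i..<j}. count_list (Bops i j s) (l + 1, j)) = N"
    using WB[OF i1 jn ij N0 set_Bops, of s "colsum i j s"] count_Bops bsum by auto
  have vB: "\<forall>\<gamma>\<in>set (Bops i j s). validop i j \<gamma>" using set_Bops[of i j s] unfolding validop_def by auto
  have invy0: "Inv i j N (Bops i j s) y0" using M[OF i1 jn ij vB, of N] y0(1) by blast
  have y0j: "lookup y0 (i, j) = colsum i j s j"
  proof -
    have "(\<Sum>l\<in>{i..<j}. count_list (Bops i j s) (l + 1, j)) = (\<Sum>l\<in>{i..<j}. colsum i j s l)"
      using count_Bops by (intro sum.cong) auto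
    then show ?thesis using y0(3) tot_cols[OF ij, of s] ts by simp
  qed
  have y0le: "\<forall>c. fst c \<noteq> i \<longrightarrow> lookup y0 c \<le> lookup s c"
  proof (intro allI impI)
    fix c :: root assume "fst c \<noteq> i"
    then have "c \<notin> keys y0" using y0(2) by blast
    then show "lookup y0 c \<le> lookup s c" by (simp add: in_keys_iff)
  qed
  have y0col: "\<forall>l. colsum i j s l \<le> colsum i j y0 l"
  proof
    fix l
    consider "i \<le> l \<and> l < j" | "l = j" | "\<not> (i \<le> l \<and> l \<le> j)" by linarith
    then show "colsum i j s l \<le> colsum i j y0 l"
    proof cases
      case 1 then show ?thesis using InvD(3)[OF invy0] count_Bops by simp
    next
      case 2
      have "lookup y0 (i, j) \<le> colsum i j y0 j"
        unfolding colsum_def by (rule member_le_sum) (use ij finite_reg in \<open>auto simp: reg_def\<close>)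
      then show ?thesis using 2 y0j by simp
    next
      case 3 then show ?thesis using colsum_out by simp
    qed
  qed
  obtain y where y: "y \<in> keys (foldr (eact n) (Aops i j s) (foldr (eact n) (Bops i j s) (start i j N)))"
     "\<forall>c. fst c \<noteq> i \<longrightarrow> lookup y c \<le> lookup s c"
    using WA[OF i1 jn ij set_Aops set_Bops _ y0(1) y0le y0col, of s] count_Aops by auto
  have yR: "y \<in> keys ?R" using y(1) by simp
  have "y = s" by (rule feasible_le_eq[OF feas[OF yR] ks y(2)])
  then have "s \<in> keys ?R" using yR by simp
  then show ?thesis using MR lexp v by blast
qed



lemma dp_step:
  assumes "dyck_path n p" "Suc t < length p"
  shows "fst (p ! t) \<le> fst (p ! Suc t) \<and> snd (p ! t) \<le> snd (p ! Suc t) \<and>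
         fst (p ! Suc t) + snd (p ! Suc t) = fst (p ! t) + snd (p ! t) + 1"
proof -
  have "p ! Suc t = (fst (p ! t) + 1, snd (p ! t)) \<or> p ! Suc t = (fst (p ! t), snd (p ! t) + 1)"
    using assms unfolding dyck_path_def by blast
  then show ?thesis by auto
qed

lemma dp_mono:
  assumes "dyck_path n p" "b < length p" "a \<le> b"
  shows "fst (p ! a) \<le> fst (p ! b) \<and> snd (p ! a) \<le> snd (p ! b) \<and>
         fst (p ! b) + snd (p ! b) = fst (p ! a) + snd (p ! a) + (b - a)"
  using assms(2,3)
proof (induction b)
  case 0 then show ?case by simp
next
  case (Suc b)
  show ?case
  proof (cases "a = Suc b")
    case True then show ?thesis by simp
  next
    case False
    then have ab: "a \<le> b" using Suc.prems by simp
    have IH: "fst (p ! a) \<le> fst (p ! b) \<and> snd (p ! a) \<le> snd (p ! b) \<and>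
         fst (p ! b) + snd (p ! b) = fst (p ! a) + snd (p ! a) + (b - a)"
      using Suc.IH Suc.prems ab by simp
    have st: "fst (p ! b) \<le> fst (p ! Suc b) \<and> snd (p ! b) \<le> snd (p ! Suc b) \<and>
         fst (p ! Suc b) + snd (p ! Suc b) = fst (p ! b) + snd (p ! b) + 1"
      by (rule dp_step[OF assms(1) Suc.prems(1)])
    have "Suc b - a = (b - a) + 1" using ab by simp
    then show ?thesis using IH st by linarith
  qed
qed

lemma dp_distinct:
  assumes "dyck_path n p"
  shows "distinct p"
  unfolding distinct_conv_nth
proof (intro allI impI)
  fix a b assume h: "a < length p" "b < length p" "a \<noteq> b"
  show "p ! a \<noteq> p ! b"
  proof (cases "a < b")
    case True
    then have "fst (p ! b) + snd (p ! b) = fst (p ! a) + snd (p ! a) + (b - a)"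
      using dp_mono[OF assms h(2)] by simp
    then show ?thesis using True by auto
  next
    case False
    then have "b < a" using h by simp
    then have "fst (p ! a) + snd (p ! a) = fst (p ! b) + snd (p ! b) + (a - b)"
      using dp_mono[OF assms h(1)] by simp
    then show ?thesis using \<open>b < a\<close> by auto
  qed
qed

lemma dp_chain:
  assumes "dyck_path n p" "\<alpha> \<in> set p" "\<beta> \<in> set p"
  shows "(fst \<alpha> \<le> fst \<beta> \<and> snd \<alpha> \<le> snd \<beta>) \<or> (fst \<beta> \<le> fst \<alpha> \<and> snd \<beta> \<le> snd \<alpha>)"
proof -
  obtain a b where ab: "a < length p" "b < length p" "\<alpha> = p ! a" "\<beta> = p ! b"
    using assms(2,3) by (metis in_set_conv_nth)
  show ?thesis
  proof (cases "a \<le> b")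
    case True then show ?thesis using dp_mono[OF assms(1) ab(2) True] ab by simp
  next
    case False then show ?thesis using dp_mono[OF assms(1) ab(1), of b] ab by simp
  qed
qed

lemma dp_bounds:
  assumes "dyck_path n p" "\<alpha> \<in> set p"
  shows "fst (hd p) \<le> fst \<alpha> \<and> snd \<alpha> \<le> snd (last p)"
proof -
  obtain a where a: "a < length p" "\<alpha> = p ! a" using assms(2) by (metis in_set_conv_nth)
  have ne: "p \<noteq> []" using assms(1) dyck_path_def by blast
  have "fst (p ! 0) \<le> fst (p ! a)" using dp_mono[OF assms(1) a(1), of 0] by simp
  moreover have "snd (p ! a) \<le> snd (p ! (length p - 1))"
    using dp_mono[OF assms(1), of "length p - 1" a] a ne by simp
  ultimately show ?thesis using a ne by (simp add: hd_conv_nth last_conv_nth)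
qed

lemma dp_reg:
  assumes "dyck_path n p"
  shows "set p \<subseteq> reg (fst (hd p)) (snd (last p))" "1 \<le> fst (hd p)" "snd (last p) \<le> n - 1"
    "fst (hd p) \<le> snd (last p)"
proof -
  have ne: "p \<noteq> []" and sp: "set p \<subseteq> Rplus n" using assms dyck_path_def by blast+
  show "set p \<subseteq> reg (fst (hd p)) (snd (last p))"
  proof
    fix \<alpha> assume a: "\<alpha> \<in> set p"
    then have "\<alpha> \<in> Rplus n" using sp by blast
    then show "\<alpha> \<in> reg (fst (hd p)) (snd (last p))"
      using dp_bounds[OF assms a] by (auto simp: reg_def Rplus_def)
  qed
  have h: "hd p \<in> Rplus n" "last p \<in> Rplus n" using ne sp by auto
  then show "1 \<le> fst (hd p)" "snd (last p) \<le> n - 1" by (auto simp: Rplus_def)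
  have "fst (hd p) \<le> fst (last p)" using dp_bounds[OF assms, of "last p"] ne by simp
  then show "fst (hd p) \<le> snd (last p)" using h(2) by (auto simp: Rplus_def)
qed

lemma choose_sub:
  fixes m :: mono
  assumes "finite A" "N \<le> (\<Sum>c\<in>A. lookup m c)"
  shows "\<exists>s::mono. (\<forall>c. lookup s c \<le> lookup m c) \<and> keys s \<subseteq> A \<and> (\<Sum>c\<in>A. lookup s c) = N"
  using assms
proof (induction A arbitrary: N rule: finite_induct)
  case empty
  then show ?case by (intro exI[of _ 0]) simp
next
  case (insert x A)
  show ?case
  proof (cases "N \<le> (\<Sum>c\<in>A. lookup m c)")
    case True
    then obtain s where s: "\<forall>c. lookup s c \<le> lookup m c" "keys s \<subseteq> A" "(\<Sum>c\<in>A. lookup s c) = N"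
      using insert.IH by blast
    have "lookup s x = 0" using s(2) insert.hyps(2) by (auto simp: in_keys_iff)
    then show ?thesis using s insert.hyps by (intro exI[of _ s]) auto
  next
    case False
    obtain s where s: "\<forall>c. lookup s c \<le> lookup m c" "keys s \<subseteq> A" "(\<Sum>c\<in>A. lookup s c) = (\<Sum>c\<in>A. lookup m c)"
      using insert.IH[of "\<Sum>c\<in>A. lookup m c"] by blast
    define r where "r = N - (\<Sum>c\<in>A. lookup m c)"
    have r: "r \<le> lookup m x" using insert.prems insert.hyps False unfolding r_def by simp
    have sx: "lookup s x = 0" using s(2) insert.hyps(2) by (auto simp: in_keys_iff)
    let ?s = "s + Poly_Mapping.single x r"
    have "\<forall>c. lookup ?s c \<le> lookup m c"
      using s(1) sx r by (auto simp: lookup_add lookup_single when_def)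
    moreover have "keys ?s \<subseteq> insert x A"
    proof -
      have "keys (Poly_Mapping.single x r) \<subseteq> {x}" by simp
      then show ?thesis using s(2) keys_add[of s "Poly_Mapping.single x r"] by blast
    qed
    moreover have "(\<Sum>c\<in>insert x A. lookup ?s c) = N"
    proof -
      have "(\<Sum>c\<in>A. lookup ?s c) = (\<Sum>c\<in>A. lookup s c)"
        using insert.hyps(2) by (intro sum.cong) (auto simp: lookup_add lookup_single when_def)
      moreover have "lookup ?s x = r" using sx by (simp add: lookup_add)
      ultimately show ?thesis using insert.hyps s(3) False unfolding r_def by simp
    qed
    ultimately show ?thesis by blast
  qed
qed



lemma Sn_zero: "0 \<in> Sn n" by (simp add: Sn_def)

lemma Sn_add: "p \<in> Sn n \<Longrightarrow> q \<in> Sn n \<Longrightarrow> p + q \<in> Sn n"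
  unfolding Sn_def using keys_add[of p q] by blast

lemma Sn_fmon: "keys m \<subseteq> Rplus n \<Longrightarrow> fmon m \<in> Sn n"
  by (simp add: Sn_def)

lemma Sn_const: "const_poly c \<in> Sn n"
  by (simp add: Sn_def const_poly_def)

lemma Sn_mult:
  assumes "p \<in> Sn n" "q \<in> Sn n"
  shows "p * q \<in> Sn n"
  unfolding Sn_def
proof (rule CollectI, rule ballI)
  fix m assume "m \<in> keys (p * q)"
  then obtain a b where ab: "m = a + b" "a \<in> keys p" "b \<in> keys q" using keys_mult[of p q] by blast
  have "keys a \<subseteq> Rplus n" "keys b \<subseteq> Rplus n" using assms ab unfolding Sn_def by blast+
  then show "keys m \<subseteq> Rplus n" using ab(1) keys_add[of a b] by blast
qed

lemma Ia_zero: "0 \<in> Ia n a"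
  unfolding Ia_def ideal_gen_def by (rule CollectI, rule exI[of _ "{}"]) auto

lemma Ia_gen: "g \<in> Igen n a \<Longrightarrow> r \<in> Sn n \<Longrightarrow> r * g \<in> Ia n a"
  unfolding Ia_def ideal_gen_def
  by (rule CollectI, rule exI[of _ "{g}"], rule exI[of _ "\<lambda>_. r"]) auto

lemma Ia_add:
  assumes "p \<in> Ia n a" "p' \<in> Ia n a"
  shows "p + p' \<in> Ia n a"
proof -
  obtain F1 q1 where 1: "p = (\<Sum>g\<in>F1. q1 g * g)" "finite F1" "F1 \<subseteq> Igen n a" "\<forall>g\<in>F1. q1 g \<in> Sn n"
    using assms(1) unfolding Ia_def ideal_gen_def by blast
  obtain F2 q2 where 2: "p' = (\<Sum>g\<in>F2. q2 g * g)" "finite F2" "F2 \<subseteq> Igen n a" "\<forall>g\<in>F2. q2 g \<in> Sn n"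
    using assms(2) unfolding Ia_def ideal_gen_def by blast
  define q where "q g = (if g \<in> F1 then q1 g else 0) + (if g \<in> F2 then q2 g else 0)" for g
  have fin: "finite (F1 \<union> F2)" using 1 2 by simp
  have e1: "(\<Sum>g\<in>F1 \<union> F2. (if g \<in> F1 then q1 g else 0) * g) = p"
  proof -
    have "(\<Sum>g\<in>F1 \<union> F2. (if g \<in> F1 then q1 g else 0) * g) = (\<Sum>g\<in>F1 \<union> F2. if g \<in> F1 then q1 g * g else 0)"
      by (intro sum.cong) auto
    also have "\<dots> = (\<Sum>g\<in>{g\<in>F1 \<union> F2. g \<in> F1}. q1 g * g)" by (rule sum.inter_filter[symmetric, OF fin])
    also have "{g\<in>F1 \<union> F2. g \<in> F1} = F1" by auto
    finally show ?thesis using 1(1) by simp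
  qed
  have e2: "(\<Sum>g\<in>F1 \<union> F2. (if g \<in> F2 then q2 g else 0) * g) = p'"
  proof -
    have "(\<Sum>g\<in>F1 \<union> F2. (if g \<in> F2 then q2 g else 0) * g) = (\<Sum>g\<in>F1 \<union> F2. if g \<in> F2 then q2 g * g else 0)"
      by (intro sum.cong) auto
    also have "\<dots> = (\<Sum>g\<in>{g\<in>F1 \<union> F2. g \<in> F2}. q2 g * g)" by (rule sum.inter_filter[symmetric, OF fin])
    also have "{g\<in>F1 \<union> F2. g \<in> F2} = F2" by auto
    finally show ?thesis using 2(1) by simp
  qed
  have "p + p' = (\<Sum>g\<in>F1 \<union> F2. q g * g)"
    unfolding q_def distrib_right sum.distrib e1 e2 ..
  moreover have "\<forall>g\<in>F1 \<union> F2. q g \<in> Sn n" unfolding q_def using 1(4) 2(4) by (auto intro: Sn_add Sn_zero)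
  ultimately show ?thesis unfolding Ia_def ideal_gen_def
    by (intro CollectI exI[of _ "F1 \<union> F2"] exI[of _ q]) (use fin 1(3) 2(3) in blast)
qed

lemma Ia_mult:
  assumes "r \<in> Sn n" "p \<in> Ia n a"
  shows "r * p \<in> Ia n a"
proof -
  obtain F q where 1: "p = (\<Sum>g\<in>F. q g * g)" "finite F" "F \<subseteq> Igen n a" "\<forall>g\<in>F. q g \<in> Sn n"
    using assms(2) unfolding Ia_def ideal_gen_def by blast
  have "r * p = (\<Sum>g\<in>F. (r * q g) * g)" unfolding 1(1) sum_distrib_left by (simp add: mult.assoc)
  moreover have "\<forall>g\<in>F. r * q g \<in> Sn n" using 1(4) assms(1) Sn_mult by blast
  ultimately show ?thesis unfolding Ia_def ideal_gen_def
    by (intro CollectI exI[of _ F] exI[of _ "\<lambda>g. r * q g"]) (use 1 in blast)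
qed

definition good :: "nat \<Rightarrow> (root \<Rightarrow> nat) \<Rightarrow> poly \<Rightarrow> bool" where
  "good n a p \<longleftrightarrow> (\<exists>F (c :: mono \<Rightarrow> complex). finite F \<and> F \<subseteq> Sa n a \<and>
           p - (\<Sum>s \<in> F. const_poly (c s) * fmon s) \<in> Ia n a)"

lemma good_Ia: "p \<in> Ia n a \<Longrightarrow> good n a p"
  unfolding good_def by (rule exI[of _ "{}"]) simp

lemma good_fmon: "s \<in> Sa n a \<Longrightarrow> good n a (fmon s)"
  unfolding good_def
  by (rule exI[of _ "{s}"], rule exI[of _ "\<lambda>_. 1"]) (simp add: const_poly_one Ia_zero)

lemma good_const:
  assumes "good n a p" shows "good n a (const_poly d * p)"
proof -
  obtain F c where h: "finite F" "F \<subseteq> Sa n a" "p - (\<Sum>s \<in> F. const_poly (c s) * fmon s) \<in> Ia n a"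
    using assms unfolding good_def by blast
  have i: "const_poly d * (p - (\<Sum>s \<in> F. const_poly (c s) * fmon s)) \<in> Ia n a"
    by (rule Ia_mult[OF Sn_const h(3)])
  have e1: "const_poly d * (\<Sum>s \<in> F. const_poly (c s) * fmon s) = (\<Sum>s \<in> F. const_poly (d * c s) * fmon s)"
    unfolding sum_distrib_left
    by (intro sum.cong refl) (simp only: mult.assoc[symmetric] const_poly_mult)
  have "const_poly d * (p - (\<Sum>s \<in> F. const_poly (c s) * fmon s)) =
      const_poly d * p - (\<Sum>s \<in> F. const_poly (d * c s) * fmon s)"
    unfolding right_diff_distrib e1 ..
  then have "const_poly d * p - (\<Sum>s \<in> F. const_poly (d * c s) * fmon s) \<in> Ia n a" using i by (simp only:)
  then show ?thesis unfolding good_def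
    by (intro exI[of _ F] exI[of _ "\<lambda>s. d * c s"] conjI h(1) h(2))
qed

lemma add_sub4: "(x::'a::ab_group_add) + y - (u + v) = (x - u) + (y - v)"
  by simp

lemma good_add:
  assumes "good n a p" "good n a p'"
  shows "good n a (p + p')"
proof -
  obtain F1 c1 where 1: "finite F1" "F1 \<subseteq> Sa n a" "p - (\<Sum>s \<in> F1. const_poly (c1 s) * fmon s) \<in> Ia n a"
    using assms(1) unfolding good_def by blast
  obtain F2 c2 where 2: "finite F2" "F2 \<subseteq> Sa n a" "p' - (\<Sum>s \<in> F2. const_poly (c2 s) * fmon s) \<in> Ia n a"
    using assms(2) unfolding good_def by blast
  define c where "c s = (if s \<in> F1 then c1 s else 0) + (if s \<in> F2 then c2 s else 0)" for s
  have fin: "finite (F1 \<union> F2)" using 1 2 by simp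
  have e1: "(\<Sum>s\<in>F1 \<union> F2. const_poly (if s \<in> F1 then c1 s else 0) * fmon s) = (\<Sum>s \<in> F1. const_poly (c1 s) * fmon s)"
  proof -
    have "(\<Sum>s\<in>F1 \<union> F2. const_poly (if s \<in> F1 then c1 s else 0) * fmon s) = (\<Sum>s\<in>F1 \<union> F2. if s \<in> F1 then const_poly (c1 s) * fmon s else 0)"
      by (intro sum.cong) (auto simp: const_poly_zero)
    also have "\<dots> = (\<Sum>s\<in>{s\<in>F1 \<union> F2. s \<in> F1}. const_poly (c1 s) * fmon s)" by (rule sum.inter_filter[symmetric, OF fin])
    also have "{s\<in>F1 \<union> F2. s \<in> F1} = F1" by auto
    finally show ?thesis .
  qed
  have e2: "(\<Sum>s\<in>F1 \<union> F2. const_poly (if s \<in> F2 then c2 s else 0) * fmon s) = (\<Sum>s \<in> F2. const_poly (c2 s) * fmon s)"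
  proof -
    have "(\<Sum>s\<in>F1 \<union> F2. const_poly (if s \<in> F2 then c2 s else 0) * fmon s) = (\<Sum>s\<in>F1 \<union> F2. if s \<in> F2 then const_poly (c2 s) * fmon s else 0)"
      by (intro sum.cong) (auto simp: const_poly_zero)
    also have "\<dots> = (\<Sum>s\<in>{s\<in>F1 \<union> F2. s \<in> F2}. const_poly (c2 s) * fmon s)" by (rule sum.inter_filter[symmetric, OF fin])
    also have "{s\<in>F1 \<union> F2. s \<in> F2} = F2" by auto
    finally show ?thesis .
  qed
  have "(\<Sum>s\<in>F1 \<union> F2. const_poly (c s) * fmon s) = (\<Sum>s \<in> F1. const_poly (c1 s) * fmon s) + (\<Sum>s \<in> F2. const_poly (c2 s) * fmon s)"
    unfolding c_def const_poly_add distrib_right sum.distrib e1 e2 ..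
  then have "p + p' - (\<Sum>s\<in>F1 \<union> F2. const_poly (c s) * fmon s) =
     (p - (\<Sum>s \<in> F1. const_poly (c1 s) * fmon s)) + (p' - (\<Sum>s \<in> F2. const_poly (c2 s) * fmon s))"
    by (simp only: add_sub4)
  then have "p + p' - (\<Sum>s\<in>F1 \<union> F2. const_poly (c s) * fmon s) \<in> Ia n a" using Ia_add[OF 1(3) 2(3)] by (simp only:)
  then show ?thesis unfolding good_def
    by (intro exI[of _ "F1 \<union> F2"] exI[of _ c] conjI fin) (use 1(2) 2(2) in auto)
qed

lemma good_sum:
  assumes "finite I" "\<forall>i\<in>I. good n a (f i)"
  shows "good n a (sum f I)"
  using assms
proof (induction I rule: finite_induct)
  case empty then show ?case by (simp add: good_Ia Ia_zero)
next
  case (insert x I) then show ?case by (simp add: good_add)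
qed

lemma Igen_foldr:
  assumes "g \<in> Igen n a" "\<forall>\<gamma>\<in>set os. \<gamma> \<in> Rplus n"
  shows "foldr (eact n) os g \<in> Igen n a"
  using assms(2)
proof (induction os)
  case Nil then show ?case using assms(1) by simp
next
  case (Cons \<gamma> os) then show ?case by (simp add: Igen.step)
qed

lemma validop_Rplus:
  assumes "1 \<le> i" "j \<le> n - 1" "validop i j \<gamma>"
  shows "\<gamma> \<in> Rplus n"
  using assms unfolding validop_def Rplus_def by auto



lemma start_Igen:
  assumes "(i, j) \<in> Rplus n"
  shows "start i j (a (i, j) + 1) \<in> Igen n a"
  unfolding start_def fvar_power[symmetric] by (rule Igen.base[OF assms])

lemma expand_mult:
  "fmon u * R = (\<Sum>x\<in>keys R. const_poly (lookup R x) * fmon (u + x))"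
proof -
  have "fmon u * R = fmon u * (\<Sum>x\<in>keys R. const_poly (lookup R x) * fmon x)"
    by (subst poly_expand[of R]) (rule refl)
  also have "\<dots> = (\<Sum>x\<in>keys R. const_poly (lookup R x) * fmon (u + x))"
    unfolding sum_distrib_left
    by (intro sum.cong refl) (simp only: mult.left_commute[of "fmon u"] fmon_mult)
  finally show ?thesis .
qed

lemma MAIN:
  shows "keys m \<subseteq> Rplus n \<longrightarrow> good n a (fmon m)"
proof (induction m rule: wf_induct[OF wf_mless[of n]])
  case (1 m)
  show ?case
  proof
    assume km: "keys m \<subseteq> Rplus n"
    show "good n a (fmon m)"
    proof (cases "m \<in> Sa n a")
      case True then show ?thesis by (rule good_fmon)
    next
      case False
      then obtain p where dp: "dyck_path n p" and viol: "\<not> sum_list (map (lookup m) p) \<le> a (base_root p)"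
        using km unfolding Sa_def by blast
      define i where "i = fst (hd p)"
      define j where "j = snd (last p)"
      define N where "N = a (i, j) + 1"
      have br: "base_root p = (i, j)" unfolding base_root_def i_def j_def ..
      have pr: "set p \<subseteq> reg i j" "1 \<le> i" "j \<le> n - 1" "i \<le> j"
        using dp_reg[OF dp] unfolding i_def j_def by auto
      have dist: "distinct p" by (rule dp_distinct[OF dp])
      have "N \<le> (\<Sum>c\<in>set p. lookup m c)"
        using viol br sum_list_distinct_conv_sum_set[OF dist, of "lookup m"] unfolding N_def by simp
      then obtain s where s: "\<forall>c. lookup s c \<le> lookup m c" "keys s \<subseteq> set p" "(\<Sum>c\<in>set p. lookup s c) = N"
        using choose_sub[of "set p" N m] by auto
      have ks: "keys s \<subseteq> reg i j" using s(2) pr(1) by blast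
      have ch: "chain s" unfolding chain_def using s(2) dp_chain[OF dp] by blast
      have N0: "0 < N" unfolding N_def by simp
      have ts: "tot i j s = N"
      proof -
        have "tot i j s = (\<Sum>c\<in>set p. lookup s c)"
          unfolding tot_def
        proof (rule sum.mono_neutral_right)
          show "\<forall>c\<in>reg i j - set p. lookup s c = 0"
            using s(2) by (auto simp: in_keys_iff)
        qed (use finite_reg pr(1) in auto)
        then show ?thesis using s(3) by simp
      qed
      let ?os = "Aops i j s @ Bops i j s"
      let ?R = "foldr (eact n) ?os (start i j N)"
      note F = FIN[OF pr(2) pr(3) pr(4) ks ch N0 ts]
      have sR: "s \<in> keys ?R" and lexp: "\<forall>x\<in>keys ?R. x = s \<or> mless n x s"
        and vos: "\<forall>\<gamma>\<in>set ?os. validop i j \<gamma>" using F by blast+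
      have kR: "\<forall>x\<in>keys ?R. keys x \<subseteq> reg i j" by (rule M_foldr_keys(2)[OF pr(2) pr(3) pr(4) vos])
      have ijR: "(i, j) \<in> Rplus n" using pr by (auto simp: Rplus_def)
      have RI: "?R \<in> Igen n a"
        unfolding N_def
        by (rule Igen_foldr[OF start_Igen[OF ijR]]) (use vos validop_Rplus[OF pr(2) pr(3)] in blast)
      define u where "u = m - s"
      have mu: "u + s = m"
      proof (rule poly_mapping_eqI)
        fix c
        have "lookup s c \<le> lookup m c" using s(1) by blast
        then show "lookup (u + s) c = lookup m c" by (simp add: u_def lookup_add lookup_minus)
      qed
      have ku: "keys u \<subseteq> Rplus n"
      proof
        fix c assume "c \<in> keys u"
        then have "c \<in> keys m" unfolding u_def by (auto simp: in_keys_iff lookup_minus)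
        then show "c \<in> Rplus n" using km by blast
      qed
      define X where "X = fmon u * ?R"
      have XI: "X \<in> Ia n a" unfolding X_def by (rule Ia_gen[OF RI Sn_fmon[OF ku]])
      define Rs where "Rs = lookup ?R s"
      have Rs0: "Rs \<noteq> 0" using sR unfolding Rs_def by (simp add: in_keys_iff)
      define S where "S = (\<Sum>x\<in>keys ?R - {s}. const_poly (lookup ?R x) * fmon (u + x))"
      have XS: "X = const_poly Rs * fmon m + S"
        unfolding X_def expand_mult S_def Rs_def
        using sum.remove[OF finite_keys sR, of "\<lambda>x. const_poly (lookup ?R x) * fmon (u + x)"] mu by simp
      have goodS: "good n a S"
        unfolding S_def
      proof (rule good_sum)
        show "finite (keys ?R - {s})" by simp
        show "\<forall>x\<in>keys ?R - {s}. good n a (const_poly (lookup ?R x) * fmon (u + x))"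
        proof
          fix x assume x: "x \<in> keys ?R - {s}"
          then have "mless n x s" using lexp by blast
          then have "mless n (u + x) m" using mless_add[of n x s u] mu by simp
          moreover have "keys (u + x) \<subseteq> Rplus n"
            using ku kR x reg_Rplus[OF pr(2) pr(3)] keys_add[of u x] by blast
          ultimately have "good n a (fmon (u + x))" using 1 by blast
          then show "good n a (const_poly (lookup ?R x) * fmon (u + x))" by (rule good_const)
        qed
      qed
      have eq: "const_poly (1 / Rs) * X + const_poly (- (1 / Rs)) * S = fmon m"
      proof -
        have a1: "const_poly (1 / Rs) * X = fmon m + const_poly (1 / Rs) * S"
          unfolding XS distrib_left mult.assoc[symmetric] const_poly_mult using Rs0
          by (simp add: const_poly_one)
        have a2: "const_poly (- (1 / Rs)) * S = - (const_poly (1 / Rs) * S)"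
          by (simp add: const_poly_def single_uminus)
        show ?thesis unfolding a1 a2 by simp
      qed
      have "good n a (const_poly (1 / Rs) * X + const_poly (- (1 / Rs)) * S)"
        by (rule good_add[OF good_const[OF good_Ia[OF XI]] good_const[OF goodS]])
      then show ?thesis unfolding eq .
    qed
  qed
qed

theorem lemma4p1:
  fixes n :: nat and a :: "root \<Rightarrow> nat"
  shows "\<forall>p \<in> Sn n. \<exists>F (c :: mono \<Rightarrow> complex). finite F \<and> F \<subseteq> Sa n a \<and>
           p - (\<Sum>s \<in> F. const_poly (c s) * fmon s) \<in> Ia n a"
proof
  fix p assume p: "p \<in> Sn n"
  have "good n a (\<Sum>m\<in>keys p. const_poly (lookup p m) * fmon m)"
  proof (rule good_sum)
    show "finite (keys p)" by simp
    show "\<forall>m\<in>keys p. good n a (const_poly (lookup p m) * fmon m)"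
    proof
      fix m assume "m \<in> keys p"
      then have "keys m \<subseteq> Rplus n" using p unfolding Sn_def by blast
      then show "good n a (const_poly (lookup p m) * fmon m)" using MAIN good_const by blast
    qed
  qed
  then have "good n a p" by (simp only: poly_expand[symmetric])
  then show "\<exists>F (c :: mono \<Rightarrow> complex). finite F \<and> F \<subseteq> Sa n a \<and>
           p - (\<Sum>s \<in> F. const_poly (c s) * fmon s) \<in> Ia n a" unfolding good_def .
qed

end
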